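(* Almost surely, to decide the isomorphism of a pair of $n$-vertex graphs $G_1$ and $G_2$ it suffices to compare their multisets of induced subgraphs on $3\log_2 n$ vertices: for almost every $n$-vertex graph $G_1$, if $G_2$ is an $n$-vertex graph with $C_{G_1}(F)=C_{G_2}(F)$ for every $F\in\Gamma_{3\log_2 n}$, then $G_1\cong G_2$.
   Context: Graphs are finite, simple, undirected; all subgraphs are induced subgraphs. $\Gamma_m$ denotes the set of all (isomorphism types of) graphs on $m$ vertices, and $C_G(F)$ is the number of induced subgraphs of $G$ isomorphic to $F$. "Almost every $n$-vertex graph has property $Q$" (or "almost surely") means: in the random graph on $n$ labeled vertices where each edge is present independently with probability $1/2$, the probability of $Q$ tends to $1$ as $n\to\infty$. *)

theory Defs
  imports Complex_Main
begin

definition graphs :: "nat \<Rightarrow> nat set set set" where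
  "graphs n = Pow {e. e \<subseteq> {..<n} \<and> card e = 2}"

definition graph_iso :: "'a set \<Rightarrow> 'a set set \<Rightarrow> 'b set \<Rightarrow> 'b set set \<Rightarrow> bool" where
  "graph_iso V1 E1 V2 E2 \<longleftrightarrow>
     (\<exists>f. bij_betw f V1 V2 \<and> (\<forall>x\<in>V1. \<forall>y\<in>V1. {x, y} \<in> E1 \<longleftrightarrow> {f x, f y} \<in> E2))"

definition ind_count :: "'a set \<Rightarrow> 'a set set \<Rightarrow> nat \<Rightarrow> nat set set \<Rightarrow> nat" where
  "ind_count V E m F = card {S. S \<subseteq> V \<and> card S = m \<and> graph_iso S (E \<inter> Pow S) {..<m} F}"

definition sub_size :: "nat \<Rightarrow> nat" where
  "sub_size n = nat \<lceil>3 * log 2 (real n)\<rceil>"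

end

theory Submission
  imports Defs "HOL-Library.FuncSet" "HOL-Real_Asymp.Real_Asymp"
begin
definition pairs :: "'a set \<Rightarrow> 'a set set" where "pairs V = {e. e \<subseteq> V \<and> card e = 2}"

lemma graphs_pairs: "graphs n = Pow (pairs {..<n})" by (simp add: graphs_def pairs_def)

definition isoF :: "('a \<Rightarrow> 'b) \<Rightarrow> 'a set \<Rightarrow> 'a set set \<Rightarrow> 'b set \<Rightarrow> 'b set set \<Rightarrow> bool" where
 "isoF f V1 E1 V2 E2 \<longleftrightarrow> bij_betw f V1 V2 \<and> (\<forall>x\<in>V1. \<forall>y\<in>V1. {x,y} \<in> E1 \<longleftrightarrow> {f x, f y} \<in> E2)"

lemma graph_iso_isoF: "graph_iso V1 E1 V2 E2 \<longleftrightarrow> (\<exists>f. isoF f V1 E1 V2 E2)"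
  by (simp add: graph_iso_def isoF_def)

lemma isoF_restrict: "isoF f T (E \<inter> Pow T) T' (E' \<inter> Pow T') \<longleftrightarrow> isoF f T E T' E'"
  unfolding isoF_def bij_betw_def by auto

lemma graph_iso_restrict: "graph_iso T (E \<inter> Pow T) T' (E' \<inter> Pow T') \<longleftrightarrow> graph_iso T E T' E'"
  by (simp add: graph_iso_isoF isoF_restrict)

lemma isoF_inv:
  assumes "isoF f V1 E1 V2 E2" shows "isoF (inv_into V1 f) V2 E2 V1 E1"
proof -
  have b: "bij_betw f V1 V2" and e: "\<forall>x\<in>V1. \<forall>y\<in>V1. {x,y} \<in> E1 \<longleftrightarrow> {f x, f y} \<in> E2"
    using assms by (auto simp: isoF_def)
  have bi: "bij_betw (inv_into V1 f) V2 V1" using b by (rule bij_betw_inv_into)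
  have "{x,y} \<in> E2 \<longleftrightarrow> {inv_into V1 f x, inv_into V1 f y} \<in> E1" if "x \<in> V2" "y \<in> V2" for x y
  proof -
    have x: "inv_into V1 f x \<in> V1" "f (inv_into V1 f x) = x"
      using that b by (auto simp: bij_betw_def inv_into_into f_inv_into_f)
    have y: "inv_into V1 f y \<in> V1" "f (inv_into V1 f y) = y"
      using that b by (auto simp: bij_betw_def inv_into_into f_inv_into_f)
    show ?thesis using e x y by metis
  qed
  then show ?thesis using bi by (simp add: isoF_def)
qed

lemma isoF_comp:
  assumes "isoF f V1 E1 V2 E2" "isoF g V2 E2 V3 E3" shows "isoF (g \<circ> f) V1 E1 V3 E3"
proof -
  have "bij_betw (g \<circ> f) V1 V3" using assms unfolding isoF_def by (auto intro: bij_betw_trans)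
  moreover have "\<forall>x\<in>V1. f x \<in> V2" using assms unfolding isoF_def bij_betw_def by auto
  ultimately show ?thesis using assms unfolding isoF_def by auto
qed

lemma isoF_id: "isoF id V E V E" by (simp add: isoF_def)

lemma graph_iso_sym: "graph_iso V1 E1 V2 E2 \<Longrightarrow> graph_iso V2 E2 V1 E1"
  using isoF_inv graph_iso_isoF by metis

lemma graph_iso_trans: "graph_iso V1 E1 V2 E2 \<Longrightarrow> graph_iso V2 E2 V3 E3 \<Longrightarrow> graph_iso V1 E1 V3 E3"
  using isoF_comp graph_iso_isoF by metis

lemma graph_iso_refl: "graph_iso V E V E"
  using isoF_id graph_iso_isoF by metis

lemma ex_iso_std:
  assumes "finite T" "card T = m" "\<forall>e\<in>E. card e = 2"
  shows "\<exists>F\<in>Pow (pairs {..<m}). graph_iso T E {..<m} F"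
proof -
  obtain b where b: "bij_betw b T {0..<card T}" using ex_bij_betw_finite_nat[OF assms(1)] by blast
  then have b': "bij_betw b T {..<m}" using assms(2) by (simp add: atLeast0LessThan)
  have inj: "inj_on b T" using b' by (simp add: bij_betw_def)
  define F where "F = (\<lambda>e. b ` e) ` {e\<in>E. e \<subseteq> T}"
  have "F \<subseteq> pairs {..<m}"
  proof
    fix f assume "f \<in> F"
    then obtain e where e: "e \<in> E" "e \<subseteq> T" "f = b ` e" by (auto simp: F_def)
    have "card f = 2" using e assms(3) card_image[OF inj_on_subset[OF inj e(2)]] by auto
    moreover have "f \<subseteq> {..<m}" using e b' by (auto simp: bij_betw_def)
    ultimately show "f \<in> pairs {..<m}" by (simp add: pairs_def)
  qed
  moreover have "isoF b T E {..<m} F"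
  proof -
    have "{x,y} \<in> E \<longleftrightarrow> {b x, b y} \<in> F" if "x \<in> T" "y \<in> T" for x y
    proof
      assume "{x,y} \<in> E" then show "{b x, b y} \<in> F" using that unfolding F_def by (intro image_eqI[of _ _ "{x,y}"]) auto
    next
      assume "{b x, b y} \<in> F"
      then obtain e where e: "e \<in> E" "e \<subseteq> T" "b ` {x,y} = b ` e" by (auto simp: F_def)
      then have "{x,y} = e" using inj_on_image_eq_iff[OF inj] that by (metis empty_subsetI insert_subset)
      then show "{x,y} \<in> E" using e by simp
    qed
    then show ?thesis using b' by (simp add: isoF_def)
  qed
  ultimately show ?thesis by (auto simp: graph_iso_isoF)
qed

lemma fiber_bij:
  assumes "finite A" "finite B" "\<And>c. card {a\<in>A. f a = c} = card {b\<in>B. g b = c}"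
  shows "\<exists>h. bij_betw h A B \<and> (\<forall>a\<in>A. g (h a) = f a)"
proof -
  have "\<forall>c. \<exists>h. bij_betw h {a\<in>A. f a = c} {b\<in>B. g b = c}"
    using assms by (intro allI finite_same_card_bij) auto
  then obtain H where H: "\<And>c. bij_betw (H c) {a\<in>A. f a = c} {b\<in>B. g b = c}" by metis
  define h where "h a = H (f a) a" for a
  have hB: "h a \<in> B \<and> g (h a) = f a" if "a \<in> A" for a
    using H[of "f a"] that unfolding h_def bij_betw_def by auto
  have "inj_on h A"
  proof (rule inj_onI)
    fix a a' assume a: "a \<in> A" "a' \<in> A" "h a = h a'"
    then have "f a = f a'" using hB by metis
    then show "a = a'" using a H[of "f a"] unfolding h_def bij_betw_def inj_on_def by auto
  qed
  moreover have "h ` A = B"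
  proof
    show "h ` A \<subseteq> B" using hB by auto
    show "B \<subseteq> h ` A"
    proof
      fix b assume b: "b \<in> B"
      then have "b \<in> H (g b) ` {a\<in>A. f a = g b}" using H[of "g b"] by (auto simp: bij_betw_def)
      then obtain a where a: "a \<in> A" "f a = g b" "b = H (g b) a" by auto
      then have "b = h a" unfolding h_def by simp
      then show "b \<in> h ` A" using a(1) by blast
    qed
  qed
  ultimately show ?thesis using hB by (auto simp: bij_betw_def)
qed

lemma pairs_card2: "G \<subseteq> pairs V \<Longrightarrow> \<forall>e\<in>G. card e = 2" by (auto simp: pairs_def)

lemma exists_beta:
  fixes V :: "'a set"
  assumes fin: "finite V" and G1: "G1 \<subseteq> pairs V" and G2: "G2 \<subseteq> pairs V"
    and cnt: "\<forall>F\<in>Pow (pairs {..<m}). ind_count V G1 m F = ind_count V G2 m F"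
  shows "\<exists>\<beta>. bij_betw \<beta> {T. T\<subseteq>V \<and> card T = m} {T. T\<subseteq>V \<and> card T = m}
     \<and> (\<forall>T. T \<subseteq> V \<and> card T = m \<longrightarrow> graph_iso T G1 (\<beta> T) G2)"
proof -
  define M where "M = {T. T\<subseteq>V \<and> card T = m}"
  define Fm where "Fm = Pow (pairs {..<m})"
  define can where "can F = (SOME F'. F' \<in> Fm \<and> graph_iso {..<m} F {..<m} F')" for F
  define rep where "rep G T = (SOME F'. F' \<in> Fm \<and> graph_iso T G {..<m} F')" for G and T :: "'a set"
  have finM: "finite M" by (rule finite_subset[of _ "Pow V"]) (auto simp: M_def fin)
  have repI: "rep G T \<in> Fm \<and> graph_iso T G {..<m} (rep G T)" if "G \<subseteq> pairs V" "T \<in> M" for G T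
  proof -
    have "finite T" using that fin by (auto simp: M_def intro: finite_subset)
    then have "\<exists>F\<in>Fm. graph_iso T G {..<m} F" using ex_iso_std that pairs_card2 unfolding M_def Fm_def by blast
    then show ?thesis unfolding rep_def by (metis (mono_tags, lifting) someI_ex)
  qed
  have canI: "can F \<in> Fm \<and> graph_iso {..<m} F {..<m} (can F)" if "F \<in> Fm" for F
    unfolding can_def using that graph_iso_refl by (metis (mono_tags, lifting) someI_ex)
  have rep_can: "rep G T = can F" if "F \<in> Fm" "graph_iso T G {..<m} F" for G T F
  proof -
    have "(\<lambda>F'. F' \<in> Fm \<and> graph_iso T G {..<m} F') = (\<lambda>F'. F' \<in> Fm \<and> graph_iso {..<m} F {..<m} F')"
    proof (intro ext iffI conjI)
      fix F' assume "F' \<in> Fm \<and> graph_iso T G {..<m} F'"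
      then show "F' \<in> Fm" "graph_iso {..<m} F {..<m} F'"
        using graph_iso_trans[OF graph_iso_sym[OF that(2)]] by auto
    next
      fix F' assume "F' \<in> Fm \<and> graph_iso {..<m} F {..<m} F'"
      then show "F' \<in> Fm" "graph_iso T G {..<m} F'"
        using graph_iso_trans[OF that(2)] by auto
    qed
    then show ?thesis unfolding rep_def can_def by simp
  qed
  have fiber: "{T\<in>M. rep G T = can F} = {T. T \<subseteq> V \<and> card T = m \<and> graph_iso T (G \<inter> Pow T) {..<m} F}"
    if "G \<subseteq> pairs V" "F \<in> Fm" for G F
  proof (intro set_eqI iffI)
    fix T assume "T \<in> {T\<in>M. rep G T = can F}"
    then have T: "T \<in> M" "rep G T = can F" by auto
    have "graph_iso T G {..<m} F" using repI[OF that(1) T(1)] canI[OF that(2)] T(2)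
      using graph_iso_trans graph_iso_sym by metis
    then show "T \<in> {T. T \<subseteq> V \<and> card T = m \<and> graph_iso T (G \<inter> Pow T) {..<m} F}"
      using T(1) by (simp add: M_def graph_iso_restrict[of T G "{..<m}" "F", simplified, symmetric])
         (metis Int_absorb2 Pow_top graph_iso_restrict inf.cobounded2 pairs_def)
  next
    fix T assume "T \<in> {T. T \<subseteq> V \<and> card T = m \<and> graph_iso T (G \<inter> Pow T) {..<m} F}"
    then have T: "T \<in> M" "graph_iso T (G \<inter> Pow T) {..<m} F" by (auto simp: M_def)
    have "graph_iso T G {..<m} F"
    proof -
      have "F \<inter> Pow {..<m} = F" using that(2) by (auto simp: Fm_def pairs_def)
      then show ?thesis using T(2) graph_iso_restrict[of T G "{..<m}" F] by simp
    qed
    then show "T \<in> {T\<in>M. rep G T = can F}" using T rep_can that by auto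
  qed
  have fiber0: "{T\<in>M. rep G T = c} = {}" if "G \<subseteq> pairs V" "\<not> (\<exists>F\<in>Fm. c = can F)" for G c
  proof -
    have "rep G T = can (rep G T)" if "T \<in> M" for T using repI[OF \<open>G \<subseteq> pairs V\<close> that] rep_can by blast
    then show ?thesis using that repI by blast
  qed
  have cards: "card {T\<in>M. rep G1 T = c} = card {T\<in>M. rep G2 T = c}" for c
  proof (cases "\<exists>F\<in>Fm. c = can F")
    case True
    then obtain F where F: "F \<in> Fm" "c = can F" by blast
    show ?thesis using fiber[OF G1 F(1)] fiber[OF G2 F(1)] cnt F unfolding ind_count_def Fm_def by simp
  next
    case False then show ?thesis using fiber0[OF G1 False] fiber0[OF G2 False] by (simp only:)
  qed
  obtain \<beta> where \<beta>: "bij_betw \<beta> M M" "\<forall>T\<in>M. rep G2 (\<beta> T) = rep G1 T"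
    using fiber_bij[OF finM finM cards] by blast
  have "graph_iso T G1 (\<beta> T) G2" if "T \<in> M" for T
  proof -
    have "\<beta> T \<in> M" using \<beta>(1) that by (auto simp: bij_betw_def)
    then show ?thesis using repI[OF G1 that] repI[OF G2 \<open>\<beta> T \<in> M\<close>] \<beta>(2) that
      graph_iso_sym graph_iso_trans by metis
  qed
  then show ?thesis using \<beta> unfolding M_def by blast
qed

lemma card_supersets:
  assumes "finite V" "C \<subseteq> V"
  shows "card {T. T \<subseteq> V \<and> card T = card C + k \<and> C \<subseteq> T} = (card V - card C) choose k"
proof -
  have finC: "finite C" using assms finite_subset by blast
  have eq: "{T. T \<subseteq> V \<and> card T = card C + k \<and> C \<subseteq> T} = (\<lambda>U. C \<union> U) ` {U. U \<subseteq> V - C \<and> card U = k}"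
  proof (intro set_eqI iffI)
    fix T assume T: "T \<in> {T. T \<subseteq> V \<and> card T = card C + k \<and> C \<subseteq> T}"
    then have "finite T" using assms finite_subset by blast
    then have "card (T - C) = k" using T card_Diff_subset[OF finC] by auto
    moreover have "T = C \<union> (T - C)" using T by auto
    ultimately show "T \<in> (\<lambda>U. C \<union> U) ` {U. U \<subseteq> V - C \<and> card U = k}" using T by blast
  next
    fix T assume "T \<in> (\<lambda>U. C \<union> U) ` {U. U \<subseteq> V - C \<and> card U = k}"
    then obtain U where U: "U \<subseteq> V - C" "card U = k" "T = C \<union> U" by auto
    have "finite U" using U assms finite_subset by (metis finite_Diff)
    then have "card T = card C + k" using U finC by (simp add: card_Un_disjoint Int_commute disjoint_iff_not_equal) (metis Diff_iff card_Un_disjoint disjoint_iff_not_equal subsetD)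
    then show "T \<in> {T. T \<subseteq> V \<and> card T = card C + k \<and> C \<subseteq> T}" using U assms by auto
  qed
  have inj: "inj_on (\<lambda>U. C \<union> U) {U. U \<subseteq> V - C \<and> card U = k}"
  proof (rule inj_onI)
    fix U U' assume "U \<in> {U. U \<subseteq> V - C \<and> card U = k}" "U' \<in> {U. U \<subseteq> V - C \<and> card U = k}" "C \<union> U = C \<union> U'"
    then show "U = U'" by blast
  qed
  show ?thesis unfolding eq card_image[OF inj] using n_subsets[of "V - C" k] assms
    by (simp add: card_Diff_subset finC)
qed

locale recon =
  fixes V :: "'a set" and S :: "'a set" and G1 G2 :: "'a set set" and \<beta> :: "'a set \<Rightarrow> 'a set"
    and \<Gamma> :: "'a set \<Rightarrow> 'a \<Rightarrow> 'a"
  assumes finV: "finite V" and SV: "S \<subseteq> V" and card2: "card S + 2 \<le> card V"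
    and G1p: "G1 \<subseteq> pairs V" and G2p: "G2 \<subseteq> pairs V"
    and rigid: "\<And>\<pi>. inj_on \<pi> S \<Longrightarrow> \<pi> ` S \<subseteq> V \<Longrightarrow> (\<forall>x\<in>S. \<forall>y\<in>S. {x,y} \<in> G1 \<longleftrightarrow> {\<pi> x, \<pi> y} \<in> G1)
        \<Longrightarrow> \<forall>x\<in>S. \<pi> x = x"
    and dist: "\<And>u v. u \<in> V - S \<Longrightarrow> v \<in> V - S \<Longrightarrow> u \<noteq> v \<Longrightarrow> \<exists>x\<in>S. ({x,u} \<in> G1) \<noteq> ({x,v} \<in> G1)"
    and beta: "bij_betw \<beta> {T. T \<subseteq> V \<and> card T = card S + 2} {T. T \<subseteq> V \<and> card T = card S + 2}"
    and Gam: "\<And>T. T \<subseteq> V \<Longrightarrow> card T = card S + 2 \<Longrightarrow> isoF (\<Gamma> T) T G1 (\<beta> T) G2"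
begin

lemma finS: "finite S" using finV SV finite_subset by blast

lemma betaM: "T \<subseteq> V \<Longrightarrow> card T = card S + 2 \<Longrightarrow> \<beta> T \<subseteq> V \<and> card (\<beta> T) = card S + 2"
  using beta by (auto simp: bij_betw_def)

lemma pullback:
  assumes T: "T \<subseteq> V" "card T = card S + 2" and C: "C \<subseteq> \<beta> T" and h: "isoF h S G1 C G2"
  shows "S \<subseteq> T \<and> (\<forall>x\<in>S. h x = \<Gamma> T x)"
proof -
  let ?g = "\<Gamma> T" let ?gi = "inv_into T (\<Gamma> T)"
  have g: "bij_betw ?g T (\<beta> T)" "\<forall>x\<in>T. \<forall>y\<in>T. {x,y} \<in> G1 \<longleftrightarrow> {?g x, ?g y} \<in> G2"
    using Gam[OF T] by (auto simp: isoF_def)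
  have hb: "bij_betw h S C" "\<forall>x\<in>S. \<forall>y\<in>S. {x,y} \<in> G1 \<longleftrightarrow> {h x, h y} \<in> G2"
    using h by (auto simp: isoF_def)
  have hx: "h x \<in> \<beta> T" if "x \<in> S" for x using hb(1) C that by (auto simp: bij_betw_def)
  have gi: "?gi (h x) \<in> T" "?g (?gi (h x)) = h x" if "x \<in> S" for x
    using hx[OF that] g(1) by (auto simp: bij_betw_def inv_into_into f_inv_into_f)
  have inj: "inj_on (?gi \<circ> h) S"
  proof (rule comp_inj_on)
    show "inj_on h S" using hb(1) by (simp add: bij_betw_def)
    show "inj_on ?gi (h ` S)" using inj_on_inv_into[of "h ` S" ?g T] hx g(1)
      by (auto simp: bij_betw_def)
  qed
  have img: "(?gi \<circ> h) ` S \<subseteq> V" using gi T by auto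
  have pres: "\<forall>x\<in>S. \<forall>y\<in>S. {x,y} \<in> G1 \<longleftrightarrow> {(?gi \<circ> h) x, (?gi \<circ> h) y} \<in> G1"
  proof (intro ballI)
    fix x y assume xy: "x \<in> S" "y \<in> S"
    have "{x,y} \<in> G1 \<longleftrightarrow> {h x, h y} \<in> G2" using hb(2) xy by auto
    also have "\<dots> \<longleftrightarrow> {?g (?gi (h x)), ?g (?gi (h y))} \<in> G2" using gi xy by simp
    also have "\<dots> \<longleftrightarrow> {?gi (h x), ?gi (h y)} \<in> G1" using g(2) gi xy by auto
    finally show "{x,y} \<in> G1 \<longleftrightarrow> {(?gi \<circ> h) x, (?gi \<circ> h) y} \<in> G1" by simp
  qed
  have fx: "\<forall>x\<in>S. (?gi \<circ> h) x = x" using rigid[OF inj img pres] .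
  show ?thesis
  proof
    show "S \<subseteq> T" using fx gi by (metis comp_apply subsetI)
    show "\<forall>x\<in>S. h x = ?g x" using fx gi by (metis comp_apply)
  qed
qed

lemma forward:
  assumes T: "T \<subseteq> V" "card T = card S + 2" "S \<subseteq> T"
  shows "isoF (\<Gamma> T) S G1 (\<Gamma> T ` S) G2 \<and> \<Gamma> T ` S \<subseteq> \<beta> T"
proof -
  have g: "bij_betw (\<Gamma> T) T (\<beta> T)" "\<forall>x\<in>T. \<forall>y\<in>T. {x,y} \<in> G1 \<longleftrightarrow> {\<Gamma> T x, \<Gamma> T y} \<in> G2"
    using Gam[OF T(1,2)] by (auto simp: isoF_def)
  have "bij_betw (\<Gamma> T) S (\<Gamma> T ` S)" using g(1) T(3) by (auto simp: bij_betw_def intro: inj_on_subset)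
  moreover have "\<Gamma> T ` S \<subseteq> \<beta> T" using g(1) T(3) unfolding bij_betw_def by blast
  ultimately show ?thesis using g T(3) unfolding isoF_def by blast
qed

lemma exists_T: "\<exists>U. U \<subseteq> V - S \<and> card U = 2"
proof -
  have "card (V - S) \<ge> 2" using card2 card_Diff_subset[OF finS SV] by simp
  then show ?thesis using obtain_subset_with_card_n by metis
qed

lemma unique_copy:
  assumes "C \<subseteq> V" "D \<subseteq> V" "isoF h S G1 C G2" "isoF h' S G1 D G2"
  shows "C = D"
proof (rule ccontr)
  assume ne: "C \<noteq> D"
  define M where "M = {T. T \<subseteq> V \<and> card T = card S + 2}"
  define Sup where "Sup X = {T\<in>M. X \<subseteq> T}" for X
  have cardC: "card C = card S" using assms(3) by (auto simp: isoF_def bij_betw_same_card[symmetric])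
  have cardD: "card D = card S" using assms(4) by (auto simp: isoF_def bij_betw_same_card[symmetric])
  have cs: "card (Sup X) = (card V - card S) choose 2" if "X \<subseteq> V" "card X = card S" for X
    using card_supersets[OF finV that(1), of 2] that(2) unfolding Sup_def M_def
    by (simp add: conj_commute conj_left_commute)
  have pos: "(card V - card S) choose 2 > 0" using card2 by simp
  have sub: "Sup C \<union> Sup D \<subseteq> \<beta> ` Sup S"
  proof
    fix T' assume T': "T' \<in> Sup C \<union> Sup D"
    then have "T' \<in> M" by (auto simp: Sup_def)
    then have "T' \<in> \<beta> ` M" using beta unfolding M_def bij_betw_def by simp
    then obtain T where T: "T \<in> M" "T' = \<beta> T" by blast
    have "S \<subseteq> T"
    proof (cases "T' \<in> Sup C")
      case True then show ?thesis using pullback[of T C h] T assms(3) by (auto simp: M_def Sup_def)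
    next
      case False then have "T' \<in> Sup D" using T' by auto
      then show ?thesis using pullback[of T D h'] T assms(4) by (auto simp: M_def Sup_def)
    qed
    then show "T' \<in> \<beta> ` Sup S" using T by (auto simp: Sup_def)
  qed
  have disj: "Sup C \<inter> Sup D = {}"
  proof (rule ccontr)
    assume "Sup C \<inter> Sup D \<noteq> {}"
    then obtain T' where T': "T' \<in> Sup C" "T' \<in> Sup D" by auto
    then have "T' \<in> M" by (auto simp: Sup_def)
    then have "T' \<in> \<beta> ` M" using beta unfolding M_def bij_betw_def by simp
    then obtain T where T: "T \<in> M" "T' = \<beta> T" by blast
    have "\<forall>x\<in>S. h x = \<Gamma> T x" "\<forall>x\<in>S. h' x = \<Gamma> T x"
      using pullback[of T C h] pullback[of T D h'] T T' assms by (auto simp: M_def Sup_def)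
    then have "h ` S = h' ` S" by (metis image_cong)
    moreover have "h ` S = C" "h' ` S = D" using assms(3,4) by (auto simp: isoF_def bij_betw_def)
    ultimately show False using ne by simp
  qed
  have finM: "finite M" by (rule finite_subset[of _ "Pow V"]) (auto simp: M_def finV)
  have "card (Sup C) + card (Sup D) = card (Sup C \<union> Sup D)"
    using disj finM by (subst card_Un_disjoint) (auto simp: Sup_def)
  also have "\<dots> \<le> card (\<beta> ` Sup S)" using sub by (intro card_mono) (use finM in \<open>auto simp: Sup_def\<close>)
  also have "\<dots> \<le> card (Sup S)" using finM by (intro card_image_le) (auto simp: Sup_def)
  finally show False using cs[OF assms(1) cardC] cs[OF assms(2) cardD] cs[OF SV refl] pos by simp
qed

end

context recon begin

lemma main: "graph_iso V G1 V G2"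
proof -
  define M where "M = {T. T \<subseteq> V \<and> card T = card S + 2}"
  obtain U0 where U0: "U0 \<subseteq> V - S" "card U0 = 2" using exists_T by blast
  have finU0: "finite U0" using U0 finV finite_subset by (metis finite_Diff)
  define T0 where "T0 = S \<union> U0"
  have T0: "T0 \<subseteq> V" "card T0 = card S + 2" "S \<subseteq> T0"
  proof -
    have "S \<inter> U0 = {}" using U0 by auto
    then have "card (S \<union> U0) = card S + card U0" using finS finU0 by (rule card_Un_disjoint[rotated 2])
    then show "T0 \<subseteq> V" "card T0 = card S + 2" "S \<subseteq> T0" using U0 SV unfolding T0_def by auto
  qed
  obtain S' \<phi> where Sphi: "S' \<subseteq> V" "isoF \<phi> S G1 S' G2"
    using forward[OF T0] betaM[OF T0(1,2)] by blast
  have uniqC: "C = S'" if "C \<subseteq> V" "isoF h S G1 C G2" for C h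
    using unique_copy[OF that(1) Sphi(1) that(2) Sphi(2)] .
  have phib: "bij_betw \<phi> S S'" "\<forall>x\<in>S. \<forall>y\<in>S. {x,y} \<in> G1 \<longleftrightarrow> {\<phi> x, \<phi> y} \<in> G2"
    using Sphi(2) by (auto simp: isoF_def)
  have cardS': "card S' = card S" using phib(1) by (simp add: bij_betw_same_card)
  have finS': "finite S'" using Sphi(1) finV finite_subset by blast
  have uniqphi: "\<forall>x\<in>S. h x = \<phi> x" if "isoF h S G1 S' G2" for h
  proof -
    let ?pi = "inv_into S \<phi> \<circ> h"
    have hb: "bij_betw h S S'" "\<forall>x\<in>S. \<forall>y\<in>S. {x,y} \<in> G1 \<longleftrightarrow> {h x, h y} \<in> G2"
      using that by (auto simp: isoF_def)
    have pi: "?pi x \<in> S" "\<phi> (?pi x) = h x" if "x \<in> S" for x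
      using hb(1) phib(1) that by (auto simp: bij_betw_def inv_into_into f_inv_into_f)
    have inj: "inj_on ?pi S"
      using hb(1) phib(1) by (metis bij_betw_def bij_betw_inv_into bij_betw_trans)
    have img: "?pi ` S \<subseteq> V" using pi SV by auto
    have pres: "\<forall>x\<in>S. \<forall>y\<in>S. {x,y} \<in> G1 \<longleftrightarrow> {?pi x, ?pi y} \<in> G1"
    proof (intro ballI)
      fix x y assume xy: "x \<in> S" "y \<in> S"
      have "{x,y} \<in> G1 \<longleftrightarrow> {h x, h y} \<in> G2" using hb(2) xy by auto
      also have "\<dots> \<longleftrightarrow> {\<phi> (?pi x), \<phi> (?pi y)} \<in> G2" using pi xy by simp
      also have "\<dots> \<longleftrightarrow> {?pi x, ?pi y} \<in> G1" using phib(2) pi xy by auto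
      finally show "{x,y} \<in> G1 \<longleftrightarrow> {?pi x, ?pi y} \<in> G1" .
    qed
    have "\<forall>x\<in>S. ?pi x = x" using rigid[OF inj img pres] .
    then show ?thesis using pi by metis
  qed
  define tr1 where "tr1 u = {x\<in>S. {x,u} \<in> G1}" for u
  define tr2 where "tr2 u = {x\<in>S. {\<phi> x,u} \<in> G2}" for u
  have GamS: "\<Gamma> T ` S = S' \<and> (\<forall>x\<in>S. \<Gamma> T x = \<phi> x)" if T: "T \<subseteq> V" "card T = card S + 2" "S \<subseteq> T" for T
  proof -
    have f: "isoF (\<Gamma> T) S G1 (\<Gamma> T ` S) G2" "\<Gamma> T ` S \<subseteq> \<beta> T" using forward[OF T] by auto
    have "\<Gamma> T ` S \<subseteq> V" using f(2) betaM[OF T(1,2)] by auto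
    then have e: "\<Gamma> T ` S = S'" using uniqC f(1) by blast
    then show ?thesis using uniqphi f(1) by auto
  qed
  have trT: "\<Gamma> T w \<in> V - S' \<and> tr2 (\<Gamma> T w) = tr1 w"
    if T: "T \<subseteq> V" "card T = card S + 2" "S \<subseteq> T" and w: "w \<in> T - S" for T w
  proof -
    have g: "bij_betw (\<Gamma> T) T (\<beta> T)" "\<forall>x\<in>T. \<forall>y\<in>T. {x,y} \<in> G1 \<longleftrightarrow> {\<Gamma> T x, \<Gamma> T y} \<in> G2"
      using Gam[OF T(1,2)] by (auto simp: isoF_def)
    have gs: "\<Gamma> T ` S = S'" "\<forall>x\<in>S. \<Gamma> T x = \<phi> x" using GamS[OF T] by auto
    have "\<Gamma> T w \<in> \<beta> T" using g(1) w by (auto simp: bij_betw_def)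
    then have inV: "\<Gamma> T w \<in> V" using betaM[OF T(1,2)] by auto
    have "\<Gamma> T w \<notin> \<Gamma> T ` S"
    proof
      assume "\<Gamma> T w \<in> \<Gamma> T ` S"
      then obtain x where "x \<in> S" "\<Gamma> T w = \<Gamma> T x" by auto
      then have "w = x" using g(1) w T(3) unfolding bij_betw_def inj_on_def by blast
      then show False using w \<open>x \<in> S\<close> by auto
    qed
    then have "\<Gamma> T w \<notin> S'" using gs by simp
    moreover have "tr2 (\<Gamma> T w) = tr1 w"
    proof -
      have "{\<phi> x, \<Gamma> T w} \<in> G2 \<longleftrightarrow> {x,w} \<in> G1" if "x \<in> S" for x
        using g(2) gs(2) that w T(3) by (metis DiffD1 subsetD)
      then show ?thesis unfolding tr1_def tr2_def by auto
    qed
    ultimately show ?thesis using inV by auto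
  qed
  have Tuv: "insert u (insert v S) \<subseteq> V \<and> card (insert u (insert v S)) = card S + 2"
    if "u \<in> V - S" "v \<in> V - S" "u \<noteq> v" for u v
    using that SV finS by auto
  have tr1inj: "tr1 u = tr1 v \<Longrightarrow> u = v" if "u \<in> V - S" "v \<in> V - S" for u v
  proof (rule ccontr)
    assume "tr1 u = tr1 v" "u \<noteq> v"
    then show False using dist[OF that \<open>u \<noteq> v\<close>] unfolding tr1_def by (metis (mono_tags, lifting) mem_Collect_eq)
  qed
  have tr2inj: "u' = v'" if "u' \<in> V - S'" "v' \<in> V - S'" "tr2 u' = tr2 v'" for u' v'
  proof (rule ccontr)
    assume ne: "u' \<noteq> v'"
    define T' where "T' = insert u' (insert v' S')"
    have T'M: "T' \<subseteq> V" "card T' = card S + 2" using that ne Sphi(1) finS' cardS' unfolding T'_def by auto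
    then have "T' \<in> \<beta> ` M" using beta unfolding M_def bij_betw_def by simp
    then obtain T where T: "T \<subseteq> V" "card T = card S + 2" "T' = \<beta> T" unfolding M_def by blast
    have "S' \<subseteq> \<beta> T" using T(3) unfolding T'_def by auto
    then have ST: "S \<subseteq> T" using pullback[OF T(1,2) _ Sphi(2)] by blast
    have g: "bij_betw (\<Gamma> T) T T'" using Gam[OF T(1,2)] T(3) by (simp add: isoF_def)
    have gs: "\<Gamma> T ` S = S'" using GamS[OF T(1,2) ST] by blast
    have "\<Gamma> T ` (T - S) = \<Gamma> T ` T - \<Gamma> T ` S"
      using g ST by (intro inj_on_image_set_diff) (auto simp: bij_betw_def)
    also have "\<dots> = {u', v'}" using g gs that unfolding T'_def bij_betw_def by auto
    finally have img: "\<Gamma> T ` (T - S) = {u', v'}" .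
    obtain a where a: "a \<in> T - S" "\<Gamma> T a = u'" using img by (metis imageE insertI1)
    obtain b where b: "b \<in> T - S" "\<Gamma> T b = v'" using img by (metis imageE insertI1 insert_commute)
    have "tr1 a = tr1 b" using trT[OF T(1,2) ST a(1)] trT[OF T(1,2) ST b(1)] a b that by simp
    then have "a = b" using tr1inj a b T(1) by auto
    then show False using a b ne by simp
  qed
  define Psi where "Psi u = (SOME u'. u' \<in> V - S' \<and> tr2 u' = tr1 u)" for u
  have PsiI: "Psi u \<in> V - S' \<and> tr2 (Psi u) = tr1 u" if u: "u \<in> V - S" for u
  proof -
    have "card (V - S) \<ge> 2" using card2 card_Diff_subset[OF finS SV] by simp
    then have "V - S - {u} \<noteq> {}" using u
      by (metis Diff_empty Diff_insert0 card_1_singleton_iff card.empty insert_Diff le_zero_eq numeral_le_one_iff semiring_norm(69) zero_neq_numeral One_nat_def Suc_1 card_Suc_Diff1 finite_Diff finV le_antisym not_less_eq_eq)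
    then obtain v where v: "v \<in> V - S" "v \<noteq> u" by auto
    have "\<exists>u'. u' \<in> V - S' \<and> tr2 u' = tr1 u"
      using trT[of "insert u (insert v S)" u] Tuv[OF u v(1) v(2)[symmetric]] u by auto
    then show ?thesis unfolding Psi_def by (rule someI_ex)
  qed
  have Psi_eq: "u' = Psi u" if "u \<in> V - S" "u' \<in> V - S'" "tr2 u' = tr1 u" for u u'
    using tr2inj[OF that(2)] PsiI[OF that(1)] that(3) by auto
  have Psi_bij: "bij_betw Psi (V - S) (V - S')"
  proof -
    have inj: "inj_on Psi (V - S)"
      using PsiI tr1inj by (metis inj_onI)
    have sub: "Psi ` (V - S) \<subseteq> V - S'" using PsiI by auto
    have "card (Psi ` (V - S)) = card (V - S')"
      using card_image[OF inj] card_Diff_subset[OF finS SV] card_Diff_subset[OF finS' Sphi(1)] cardS' by simp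
    then have "Psi ` (V - S) = V - S'" using sub finV by (intro card_subset_eq) auto
    then show ?thesis using inj by (simp add: bij_betw_def)
  qed
  have edge: "{u,v} \<in> G1 \<longleftrightarrow> {Psi u, Psi v} \<in> G2" if "u \<in> V - S" "v \<in> V - S" for u v
  proof (cases "u = v")
    case True
    have "{u} \<notin> G1" using G1p by (auto simp: pairs_def)
    moreover have "{Psi u} \<notin> G2" using G2p by (auto simp: pairs_def)
    ultimately show ?thesis using True by simp
  next
    case False
    define T where "T = insert u (insert v S)"
    have T: "T \<subseteq> V" "card T = card S + 2" "S \<subseteq> T" using Tuv[OF that False] unfolding T_def by auto
    have gu: "\<Gamma> T u = Psi u" using trT[OF T, of u] that Psi_eq unfolding T_def by auto
    have gv: "\<Gamma> T v = Psi v" using trT[OF T, of v] that Psi_eq unfolding T_def by auto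
    have "\<forall>x\<in>T. \<forall>y\<in>T. {x,y} \<in> G1 \<longleftrightarrow> {\<Gamma> T x, \<Gamma> T y} \<in> G2"
      using Gam[OF T(1,2)] by (simp add: isoF_def)
    then show ?thesis using gu gv unfolding T_def by auto
  qed
  define f where "f x = (if x \<in> S then \<phi> x else Psi x)" for x
  have fb: "bij_betw f V V"
  proof -
    have "bij_betw f S S'" using phib(1) by (rule bij_betw_cong[THEN iffD1, rotated]) (simp add: f_def)
    moreover have "bij_betw f (V - S) (V - S')" using Psi_bij by (rule bij_betw_cong[THEN iffD1, rotated]) (simp add: f_def)
    ultimately have "bij_betw f (S \<union> (V - S)) (S' \<union> (V - S'))" by (rule bij_betw_combine) auto
    moreover have "S \<union> (V - S) = V" "S' \<union> (V - S') = V" using SV Sphi(1) by auto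
    ultimately show ?thesis by simp
  qed
  have mixed: "{x,u} \<in> G1 \<longleftrightarrow> {f x, f u} \<in> G2" if "x \<in> S" "u \<in> V - S" for x u
  proof -
    have "{x,u} \<in> G1 \<longleftrightarrow> x \<in> tr1 u" using that by (simp add: tr1_def)
    also have "\<dots> \<longleftrightarrow> x \<in> tr2 (Psi u)" using PsiI[OF that(2)] by simp
    also have "\<dots> \<longleftrightarrow> {f x, f u} \<in> G2" using that by (simp add: tr2_def f_def)
    finally show ?thesis .
  qed
  have "\<forall>x\<in>V. \<forall>y\<in>V. {x,y} \<in> G1 \<longleftrightarrow> {f x, f y} \<in> G2"
  proof (intro ballI)
    fix x y assume xy: "x \<in> V" "y \<in> V"
    show "{x,y} \<in> G1 \<longleftrightarrow> {f x, f y} \<in> G2"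
    proof (cases "x \<in> S"; cases "y \<in> S")
      assume "x \<in> S" "y \<in> S" then show ?thesis using phib(2) by (simp add: f_def)
    next
      assume "x \<in> S" "y \<notin> S" then show ?thesis using mixed xy by auto
    next
      assume "x \<notin> S" "y \<in> S" then show ?thesis using mixed[of y x] xy by (simp add: insert_commute)
    next
      assume "x \<notin> S" "y \<notin> S" then show ?thesis using edge[of x y] xy by (simp add: f_def)
    qed
  qed
  then show ?thesis using fb unfolding graph_iso_def by blast
qed

end

lemma count_constr:
  fixes E :: "'a set set" and Q :: "'a set set"
  assumes finE: "finite E" and QE: "Q \<subseteq> E"
    and mu: "\<And>q. q \<in> Q \<Longrightarrow> \<rho> q \<in> Q \<Longrightarrow> \<mu> (\<rho> q) < (\<mu> q :: nat)"
  shows "card {G \<in> Pow E. \<forall>q\<in>Q. q \<in> G \<longleftrightarrow> \<rho> q \<in> G} \<le> 2 ^ (card E - card Q)"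
proof -
  let ?C = "{G \<in> Pow E. \<forall>q\<in>Q. q \<in> G \<longleftrightarrow> \<rho> q \<in> G}"
  have inj: "inj_on (\<lambda>G. G - Q) ?C"
  proof (rule inj_onI)
    fix G G' assume G: "G \<in> ?C" and G': "G' \<in> ?C" and eq: "G - Q = G' - Q"
    have "\<forall>q. \<mu> q = k \<longrightarrow> q \<in> Q \<longrightarrow> (q \<in> G \<longleftrightarrow> q \<in> G')" for k
    proof (induction k rule: less_induct)
      case (less k)
      show ?case
      proof (intro allI impI)
        fix q assume q: "\<mu> q = k" "q \<in> Q"
        have "q \<in> G \<longleftrightarrow> \<rho> q \<in> G" using G q by auto
        also have "\<dots> \<longleftrightarrow> \<rho> q \<in> G'"
        proof (cases "\<rho> q \<in> Q")
          case True then show ?thesis using less mu[OF q(2) True] q(1) by blast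
        next
          case False then show ?thesis using eq by blast
        qed
        also have "\<dots> \<longleftrightarrow> q \<in> G'" using G' q by auto
        finally show "q \<in> G \<longleftrightarrow> q \<in> G'" .
      qed
    qed
    then have "\<forall>q\<in>Q. q \<in> G \<longleftrightarrow> q \<in> G'" by blast
    then show "G = G'" using eq by blast
  qed
  have "(\<lambda>G. G - Q) ` ?C \<subseteq> Pow (E - Q)" by auto
  then have "card ?C \<le> card (Pow (E - Q))"
    using card_inj_on_le[OF inj] finE by auto
  also have "\<dots> = 2 ^ (card E - card Q)"
    using finE QE by (simp add: card_Pow card_Diff_subset finite_subset)
  finally show ?thesis .
qed

lemma card_pairs: "finite V \<Longrightarrow> card (pairs V) = card V choose 2"
  unfolding pairs_def using n_subsets by blast

lemma indep_subset:
  assumes "finite X" "inj_on f X" "\<forall>x\<in>X. f x \<noteq> x"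
  shows "\<exists>A \<subseteq> X. f ` A \<inter> A = {} \<and> card X \<le> 3 * card A"
  using assms
proof (induction "card X" arbitrary: X rule: less_induct)
  case less
  show ?case
  proof (cases "X = {}")
    case True then show ?thesis by auto
  next
    case False
    then obtain x where x: "x \<in> X" by auto
    define Y where "Y = {y\<in>X. f y = x}"
    have cY: "card Y \<le> 1"
    proof -
      have "\<forall>y\<in>Y. \<forall>y'\<in>Y. y = y'" using less.prems(2) unfolding Y_def inj_on_def by auto
      then show ?thesis using less.prems(1) unfolding Y_def by (metis (no_types, lifting) card_le_Suc0_iff_eq finite_subset mem_Collect_eq subsetI One_nat_def)
    qed
    define X' where "X' = X - ({x, f x} \<union> Y)"
    have finY: "finite Y" using less.prems(1) unfolding Y_def by auto
    have "card ({x, f x} \<union> Y) \<le> 3"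
    proof -
      have "card ({x, f x} \<union> Y) \<le> card {x, f x} + card Y" by (rule card_Un_le)
      also have "card {x, f x} \<le> 2" by (simp add: card_insert_le_m1)
      finally show ?thesis using cY by simp
    qed
    then have cX': "card X \<le> card X' + 3"
      unfolding X'_def using diff_card_le_card_Diff[of "{x, f x} \<union> Y" X] finY by simp
    have lt: "card X' < card X" unfolding X'_def using x less.prems(1)
      by (intro psubset_card_mono) auto
    obtain A' where A': "A' \<subseteq> X'" "f ` A' \<inter> A' = {}" "card X' \<le> 3 * card A'"
      using less.hyps[OF lt] less.prems unfolding X'_def by (meson Diff_subset finite_subset inj_on_subset subset_iff)
    define A where "A = insert x A'"
    have xA': "x \<notin> A'" using A'(1) unfolding X'_def by auto
    have fin': "finite A'" using A'(1) less.prems(1) unfolding X'_def by (meson finite_Diff finite_subset)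
    have "f ` A \<inter> A = {}"
    proof -
      have "f x \<notin> A" using A'(1) less.prems(3) x unfolding A_def X'_def by auto
      moreover have "f a \<noteq> x" if "a \<in> A'" for a using that A'(1) unfolding X'_def Y_def by auto
      ultimately show ?thesis using A'(2) unfolding A_def by auto
    qed
    moreover have "A \<subseteq> X" using A'(1) x unfolding A_def X'_def by auto
    moreover have "card X \<le> 3 * card A" using cX' A'(3) xA' fin' unfolding A_def by simp
    ultimately show ?thesis by blast
  qed
qed

lemma choose2_nat: "2 * (n choose 2) = n * (n - 1)"
proof -
  have "even (n * (n - 1))" by (cases "even n") auto
  then show ?thesis by (simp add: choose_two)
qed

lemma choose2_real: "real (n choose 2) = real n * (real n - 1) / 2"
proof -
  have "real (2 * (n choose 2)) = real (n * (n - 1))" using choose2_nat by metis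
  then show ?thesis by (cases n) (auto simp: field_simps)
qed

lemma KL:
  fixes \<pi> :: "'a \<Rightarrow> 'a" and S :: "'a set"
  assumes finS: "finite S" and inj: "inj_on \<pi> S" and s16: "card S \<ge> 16"
  shows "\<exists>Q \<mu>. Q \<subseteq> pairs S \<and> (\<forall>q\<in>Q. \<pi> ` q \<in> Q \<longrightarrow> \<mu> (\<pi> ` q) < (\<mu> q::nat))
     \<and> real (card Q) \<ge> (3 * real (card S) / 8 - 1/2) * real (card {x\<in>S. \<pi> x \<notin> S})
          + real (card S) / 32 * real (card {x\<in>S. \<pi> x \<noteq> x \<and> \<pi> x \<in> S})"
proof -
  define s where "s = card S"
  define L where "L = {x\<in>S. \<pi> x \<notin> S}"
  define D where "D = {x\<in>S. \<pi> x \<noteq> x \<and> \<pi> x \<in> S}"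
  define k where "k = card L"
  define j where "j = card D"
  have LS: "L \<subseteq> S" and DS: "D \<subseteq> S" unfolding L_def D_def by auto
  have finL: "finite L" and finD: "finite D" using LS DS finS finite_subset by auto
  have ks: "k \<le> s" and js: "j \<le> s" unfolding k_def j_def s_def using LS DS finS by (auto intro: card_mono)
  define QL where "QL = {q\<in>pairs S. q \<inter> L \<noteq> {}}"
  have QL_eq: "QL = pairs S - pairs (S - L)" unfolding QL_def pairs_def by auto
  have finSL: "finite (S - L)" using finS by auto
  have psub: "pairs (S - L) \<subseteq> pairs S" unfolding pairs_def by auto
  have cardQL: "card QL = card (pairs S) - card (pairs (S - L))"
    unfolding QL_eq using psub finSL by (intro card_Diff_subset) (auto simp: card_pairs intro: finite_subset[of _ "Pow (S - L)"] simp: pairs_def)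
  have cSL: "card (S - L) = s - k" unfolding s_def k_def using card_Diff_subset[OF finL LS] .
  have "card (pairs (S - L)) \<le> card (pairs S)"
    using psub finS by (intro card_mono) (auto intro: finite_subset[of _ "Pow S"] simp: pairs_def)
  then have rQL: "real (card QL) = real (s choose 2) - real ((s - k) choose 2)"
    using cardQL card_pairs[OF finS] card_pairs[OF finSL] cSL s_def by (simp add: of_nat_diff)
  have rQL2: "real (card QL) = real k * (2 * real s - real k - 1) / 2"
    unfolding rQL choose2_real using ks by (simp add: of_nat_diff field_simps)
  have QLb: "real (card QL) \<ge> real k * (real s - 1) / 2"
  proof -
    have "real k * (real s - real k) \<ge> 0" using ks by simp
    then show ?thesis unfolding rQL2 by (simp add: field_simps algebra_simps)
  qed
  have QLexit: "\<pi> ` q \<notin> pairs S" if qq: "q \<in> QL" for q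
  proof -
    obtain x where "x \<in> q" "x \<in> L" using qq unfolding QL_def by auto
    then have "\<pi> x \<in> \<pi> ` q" "\<pi> x \<notin> S" unfolding L_def by auto
    then show ?thesis unfolding pairs_def by auto
  qed
  have QLp: "QL \<subseteq> pairs S" unfolding QL_def by auto
  have goal_form: "?thesis \<longleftrightarrow> (\<exists>Q \<mu>. Q \<subseteq> pairs S \<and> (\<forall>q\<in>Q. \<pi> ` q \<in> Q \<longrightarrow> \<mu> (\<pi> ` q) < (\<mu> q::nat))
     \<and> real (card Q) \<ge> (3 * real s / 8 - 1/2) * real k + real s / 32 * real j)"
    unfolding s_def k_def j_def L_def D_def by simp
  have s16': "real s \<ge> 16" using s16 s_def by simp
  have main: "\<exists>Q \<mu>. Q \<subseteq> pairs S \<and> (\<forall>q\<in>Q. \<pi> ` q \<in> Q \<longrightarrow> \<mu> (\<pi> ` q) < (\<mu> q::nat))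
     \<and> real (card Q) \<ge> (3 * real s / 8 - 1/2) * real k + real s / 32 * real j"
  proof (cases "4 * k \<ge> s")
    case True
    have F1: "real k * real s \<ge> real s / 4 * real s"
      using True s16' by (intro mult_right_mono) auto
    have F2: "real s * real j \<le> real s * real s" using js by (intro mult_left_mono) auto
    have "real (card QL) \<ge> (3 * real s / 8 - 1/2) * real k + real s / 32 * real j"
    proof -
      have "real (card QL) \<ge> real k * real s / 2 - real k / 2" using QLb by (simp add: field_simps)
      then show ?thesis using F1 F2 by (simp add: field_simps)
    qed
    moreover have "\<forall>q\<in>QL. \<pi> ` q \<in> QL \<longrightarrow> (\<lambda>_. 0::nat) (\<pi> ` q) < (\<lambda>_. 0) q"
      using QLexit QLp by auto
    ultimately show ?thesis using QLp by (intro exI[of _ QL] exI[of _ "\<lambda>_. 0::nat"]) simp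
  next
    case False
    then have k4: "4 * real k < real s" by simp
    have injD: "inj_on \<pi> D" using inj DS inj_on_subset by blast
    obtain A where A: "A \<subseteq> D" "\<pi> ` A \<inter> A = {}" "j \<le> 3 * card A"
      using indep_subset[OF finD injD] unfolding D_def j_def by auto
    have finA: "finite A" using A finD finite_subset by blast
    obtain A' where A': "A' \<subseteq> A" "card A' = min (card A) (s div 8)" "finite A'"
      using obtain_subset_with_card_n[of "min (card A) (s div 8)" A] by auto
    have A'D: "A' \<subseteq> D" using A A' by auto
    have A'SL: "A' \<subseteq> S - L" using A'D unfolding D_def L_def by auto
    have A'disj: "\<pi> ` A' \<inter> A' = {}" using A(2) A'(1) by blast
    define B' where "B' = (S - L) - (A' \<union> \<pi> ` A')"
    have finB': "finite B'" unfolding B'_def using finS by auto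
    have AB: "A' \<inter> B' = {}" unfolding B'_def by auto
    define QB where "QB = (\<lambda>(a,b). {a,b}) ` (A' \<times> B')"
    have injQB: "inj_on (\<lambda>(a,b). {a,b}) (A' \<times> B')"
    proof (rule inj_onI, clarify)
      fix a b a2 b2 assume "a \<in> A'" "b \<in> B'" "a2 \<in> A'" "b2 \<in> B'" "{a,b} = {a2,b2}"
      then show "a = a2 \<and> b = b2" using AB by (auto simp: doubleton_eq_iff)
    qed
    have cQB: "card QB = card A' * card B'" unfolding QB_def using card_image[OF injQB] A'(3) finB'
      by (simp add: card_cartesian_product)
    have QBp: "QB \<subseteq> pairs S"
    proof
      fix q assume "q \<in> QB"
      then obtain a b where ab: "a \<in> A'" "b \<in> B'" "q = {a,b}" unfolding QB_def by auto
      then have "a \<noteq> b" using AB by auto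
      then show "q \<in> pairs S" using ab A'SL unfolding pairs_def B'_def by auto
    qed
    have QBL: "q \<inter> L = {}" if "q \<in> QB" for q
      using that A'SL unfolding QB_def B'_def by auto
    define Q where "Q = QL \<union> QB"
    define \<mu> where "\<mu> q = (if q \<inter> L = {} then 1 else 0::nat)" for q
    have Qp: "Q \<subseteq> pairs S" using QLp QBp unfolding Q_def by auto
    have disjQ: "QL \<inter> QB = {}" using QBL unfolding QL_def by auto
    have finQL: "finite QL" using finS unfolding QL_def pairs_def by (auto intro: finite_subset[of _ "Pow S"])
    have finQB: "finite QB" unfolding QB_def using A'(3) finB' by auto
    have cQ: "card Q = card QL + card QB" unfolding Q_def using card_Un_disjoint[OF finQL finQB disjQ] .
    have mucond: "\<forall>q\<in>Q. \<pi> ` q \<in> Q \<longrightarrow> \<mu> (\<pi> ` q) < \<mu> q"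
    proof (intro ballI impI)
      fix q assume q: "q \<in> Q" "\<pi> ` q \<in> Q"
      show "\<mu> (\<pi> ` q) < \<mu> q"
      proof (cases "q \<in> QL")
        case True then show ?thesis using QLexit Qp q(2) by auto
      next
        case False
        then have qB: "q \<in> QB" using q(1) unfolding Q_def by auto
        then obtain a b where ab: "a \<in> A'" "b \<in> B'" "q = {a,b}" unfolding QB_def by auto
        have "\<pi> ` q \<notin> QB"
        proof
          assume "\<pi> ` q \<in> QB"
          then obtain a2 b2 where "a2 \<in> A'" "b2 \<in> B'" "\<pi> ` q = {a2,b2}" unfolding QB_def by auto
          then have "\<pi> a \<in> A' \<union> B'" using ab by auto
          moreover have "\<pi> a \<in> \<pi> ` A'" using ab by auto
          ultimately show False using A'disj unfolding B'_def by auto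
        qed
        then have "\<pi> ` q \<in> QL" using q(2) unfolding Q_def by auto
        then have "\<mu> (\<pi> ` q) = 0" unfolding \<mu>_def QL_def by auto
        moreover have "\<mu> q = 1" using QBL[OF qB] unfolding \<mu>_def by auto
        ultimately show ?thesis by simp
      qed
    qed
    have c8: "8 * card A' \<le> s"
    proof -
      have "card A' \<le> s div 8" using A'(2) by simp
      moreover have "8 * (s div 8) \<le> s" by (rule times_div_less_eq_dividend)
      ultimately show ?thesis by linarith
    qed
    have "card (A' \<union> \<pi> ` A') \<le> 2 * card A'"
    proof -
      have "card (A' \<union> \<pi> ` A') \<le> card A' + card (\<pi> ` A')" by (rule card_Un_le)
      also have "card (\<pi> ` A') \<le> card A'" by (rule card_image_le[OF A'(3)])
      finally show ?thesis by simp
    qed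
    moreover have "card (S - L) - card (A' \<union> \<pi> ` A') \<le> card B'"
      unfolding B'_def using A'(3) by (intro diff_card_le_card_Diff) auto
    ultimately have "real (card B') \<ge> real s - real k - 2 * real (card A')"
      using cSL ks by linarith
    then have B'b: "real (card B') \<ge> real s / 2" using k4 c8 by linarith
    have QBb: "real (card QB) \<ge> real (card A') * (real s / 2)"
      unfolding cQB of_nat_mult using B'b by (intro mult_left_mono) auto
    have QBb2: "real (card A') * (real s / 2) \<ge> real s / 32 * real j"
    proof (cases "card A \<le> s div 8")
      case True
      then have "card A' = card A" using A'(2) by simp
      then have "3 * real (card A') \<ge> real j" using A(3) by simp
      then have "real (card A') * (real s / 2) \<ge> real j / 3 * (real s / 2)"
        using s16' by (intro mult_right_mono) auto
      moreover have "real j / 3 * (real s / 2) \<ge> real s / 32 * real j"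
      proof -
        have "0 \<le> real s * real j" by simp
        moreover have "real j / 3 * (real s / 2) = real s * real j / 6" "real s / 32 * real j = real s * real j / 32"
          by (simp_all add: field_simps)
        ultimately show ?thesis by linarith
      qed
      ultimately show ?thesis by linarith
    next
      case False
      then have "card A' = s div 8" using A'(2) by simp
      moreover have "8 * (s div 8) + 7 \<ge> s" by linarith
      ultimately have "8 * real (card A') \<ge> real s - 7" by linarith
      then have "real (card A') \<ge> real s / 16" using s16' by linarith
      then have "real (card A') * (real s / 2) \<ge> real s / 16 * (real s / 2)"
        using s16' by (intro mult_right_mono) auto
      moreover have "real s / 16 * (real s / 2) \<ge> real s / 32 * real j"
      proof -
        have "real s * real j \<le> real s * real s" using js by (intro mult_left_mono) auto
        moreover have "real s / 16 * (real s / 2) = real s * real s / 32" "real s / 32 * real j = real s * real j / 32"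
          by (simp_all add: field_simps)
        ultimately show ?thesis by linarith
      qed
      ultimately show ?thesis by linarith
    qed
    have "real k * (real s - 1) / 2 \<ge> (3 * real s / 8 - 1/2) * real k"
    proof -
      have "0 \<le> real k * real s" by simp
      then show ?thesis by (simp add: algebra_simps)
    qed
    then have X1: "(3 * real s / 8 - 1/2) * real k \<le> real (card QL)" using QLb by linarith
    have X2: "real s / 32 * real j \<le> real (card QB)" using QBb QBb2 by linarith
    have "real (card Q) = real (card QL) + real (card QB)" using cQ by simp
    then have "real (card Q) \<ge> (3 * real s / 8 - 1/2) * real k + real s / 32 * real j"
      using X1 X2 by linarith
    then show ?thesis using Qp mucond by (intro exI[of _ Q] exI[of _ \<mu>]) simp
  qed
  show ?thesis unfolding goal_form by (rule main)
qed

definition rigidP :: "nat \<Rightarrow> nat \<Rightarrow> nat set set \<Rightarrow> bool" where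
  "rigidP n s G \<longleftrightarrow> (\<forall>\<pi>. inj_on \<pi> {..<s} \<longrightarrow> \<pi> ` {..<s} \<subseteq> {..<n} \<longrightarrow>
     (\<forall>x\<in>{..<s}. \<forall>y\<in>{..<s}. {x,y} \<in> G \<longleftrightarrow> {\<pi> x, \<pi> y} \<in> G) \<longrightarrow> (\<forall>x\<in>{..<s}. \<pi> x = x))"

definition distP :: "nat \<Rightarrow> nat \<Rightarrow> nat set set \<Rightarrow> bool" where
  "distP n s G \<longleftrightarrow> (\<forall>u\<in>{..<n} - {..<s}. \<forall>v\<in>{..<n} - {..<s}. u \<noteq> v \<longrightarrow> (\<exists>x\<in>{..<s}. ({x,u} \<in> G) \<noteq> ({x,v} \<in> G)))"

lemma finite_pairs: "finite V \<Longrightarrow> finite (pairs V)"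
  unfolding pairs_def by (rule finite_subset[of _ "Pow V"]) auto

lemma badD_bound:
  assumes "s \<le> n"
  shows "card {G \<in> graphs n. \<not> distP n s G} \<le> n * n * 2 ^ ((n choose 2) - s)"
proof -
  define V where "V = {..<n::nat}"
  define S where "S = {..<s::nat}"
  define E where "E = pairs V"
  have finE: "finite E" unfolding E_def V_def by (intro finite_pairs) auto
  have cE: "card E = n choose 2" unfolding E_def V_def by (simp add: card_pairs)
  define W where "W = {(u,v). u \<in> V - S \<and> v \<in> V - S \<and> u \<noteq> v}"
  define Qf where "Qf u = (\<lambda>x. {x,u}) ` S" for u
  define sg where "sg u v = (\<lambda>y. if y = u then v else y)" for u v :: nat
  define C where "C w = {G \<in> Pow E. \<forall>q\<in>Qf (fst w). q \<in> G \<longleftrightarrow> sg (fst w) (snd w) ` q \<in> G}" for w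
  have sub: "{G \<in> graphs n. \<not> distP n s G} \<subseteq> (\<Union>w\<in>W. C w)"
  proof
    fix G assume G: "G \<in> {G \<in> graphs n. \<not> distP n s G}"
    then obtain u v where uv: "u \<in> V - S" "v \<in> V - S" "u \<noteq> v" "\<forall>x\<in>S. ({x,u} \<in> G) = ({x,v} \<in> G)"
      unfolding distP_def V_def S_def by auto
    have "G \<in> C (u,v)"
    proof -
      have "G \<in> Pow E" using G unfolding E_def V_def graphs_pairs by auto
      moreover have "\<forall>q\<in>Qf u. q \<in> G \<longleftrightarrow> sg u v ` q \<in> G"
      proof
        fix q assume "q \<in> Qf u"
        then obtain x where x: "x \<in> S" "q = {x,u}" unfolding Qf_def by auto
        then have "x \<noteq> u" using uv by auto
        then have "sg u v ` q = {x, v}" unfolding x(2) sg_def by auto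
        then show "q \<in> G \<longleftrightarrow> sg u v ` q \<in> G" using uv(4) x by simp
      qed
      ultimately show ?thesis unfolding C_def by simp
    qed
    then show "G \<in> (\<Union>w\<in>W. C w)" using uv unfolding W_def by blast
  qed
  have cC: "card (C w) \<le> 2 ^ ((n choose 2) - s)" if wW: "w \<in> W" for w
  proof -
    obtain u v where w: "w = (u,v)" "u \<in> V - S" "v \<in> V - S" "u \<noteq> v" using wW unfolding W_def by auto
    have QE: "Qf u \<subseteq> E" using w unfolding Qf_def E_def pairs_def V_def S_def by (auto simp: card_insert_if)
    have out: "sg u v ` q \<notin> Qf u" if qQ: "q \<in> Qf u" for q
    proof
      assume a: "sg u v ` q \<in> Qf u"
      obtain x where x: "x \<in> S" "q = {x,u}" using qQ unfolding Qf_def by auto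
      then have "x \<noteq> u" using w by auto
      then have "sg u v ` q = {x, v}" unfolding x(2) sg_def by auto
      then obtain x' where "x' \<in> S" "{x,v} = {x',u}" using a unfolding Qf_def by auto
      then show False using w x by (auto simp: doubleton_eq_iff)
    qed
    have "card (C w) \<le> 2 ^ (card E - card (Qf u))"
      unfolding C_def w(1) fst_conv snd_conv
      by (rule count_constr[OF finE QE, where \<mu> = "\<lambda>_. 0"]) (use out in auto)
    moreover have "card (Qf u) = s"
    proof -
      have "inj_on (\<lambda>x. {x,u}) S" using w unfolding inj_on_def by (auto simp: doubleton_eq_iff)
      then show ?thesis unfolding Qf_def S_def by (simp add: card_image)
    qed
    ultimately show ?thesis using cE by simp
  qed
  have finW: "finite W" unfolding W_def V_def by (rule finite_subset[of _ "{..<n} \<times> {..<n}"]) auto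
  have cW: "card W \<le> n * n"
  proof -
    have "card W \<le> card ({..<n} \<times> {..<n})" unfolding W_def V_def by (intro card_mono) auto
    then show ?thesis by (simp add: card_cartesian_product)
  qed
  have "card {G \<in> graphs n. \<not> distP n s G} \<le> card (\<Union>w\<in>W. C w)"
    using sub finW finE unfolding C_def by (intro card_mono) (auto intro: finite_subset[of _ "Pow E"])
  also have "\<dots> \<le> (\<Sum>w\<in>W. card (C w))" by (rule card_UN_le[OF finW])
  also have "\<dots> \<le> (\<Sum>w\<in>W. 2 ^ ((n choose 2) - s))" using cC by (intro sum_mono) auto
  also have "\<dots> = card W * 2 ^ ((n choose 2) - s)" by simp
  also have "\<dots> \<le> n * n * 2 ^ ((n choose 2) - s)" using cW by simp
  finally show ?thesis .
qed

lemma prod_cases3: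
  fixes \<alpha> \<beta> :: real and \<pi> :: "nat \<Rightarrow> nat"
  assumes "finite S"
  shows "(\<Prod>x\<in>S. (if \<pi> x = x then 1 else if \<pi> x \<in> S then \<beta> else \<alpha>))
       = \<alpha> ^ card {x\<in>S. \<pi> x \<notin> S} * \<beta> ^ card {x\<in>S. \<pi> x \<noteq> x \<and> \<pi> x \<in> S}"
proof -
  have "(\<Prod>x\<in>S. (if \<pi> x = x then 1 else if \<pi> x \<in> S then \<beta> else \<alpha>))
     = (\<Prod>x\<in>S \<inter> {x. \<pi> x = x}. 1) * (\<Prod>x\<in>S \<inter> - {x. \<pi> x = x}. (if \<pi> x \<in> S then \<beta> else \<alpha>))"
    by (rule prod.If_cases[OF assms])
  also have "(\<Prod>x\<in>S \<inter> - {x. \<pi> x = x}. (if \<pi> x \<in> S then \<beta> else \<alpha>))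
     = (\<Prod>x\<in>S \<inter> - {x. \<pi> x = x} \<inter> {x. \<pi> x \<in> S}. \<beta>) * (\<Prod>x\<in>S \<inter> - {x. \<pi> x = x} \<inter> - {x. \<pi> x \<in> S}. \<alpha>)"
    by (rule prod.If_cases) (use assms in auto)
  also have "S \<inter> - {x. \<pi> x = x} \<inter> {x. \<pi> x \<in> S} = {x\<in>S. \<pi> x \<noteq> x \<and> \<pi> x \<in> S}" by auto
  also have "S \<inter> - {x. \<pi> x = x} \<inter> - {x. \<pi> x \<in> S} = {x\<in>S. \<pi> x \<notin> S}" by auto
  finally show ?thesis by simp
qed

lemma sum_c_bound:
  fixes \<alpha> \<beta> :: real
  assumes "x \<in> S" "S \<subseteq> V" "finite V" "\<alpha> \<ge> 0" "\<beta> \<ge> 0"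
  shows "(\<Sum>v\<in>V. (if v = x then 1 else if v \<in> S then \<beta> else \<alpha>)) \<le> 1 + real (card S) * \<beta> + real (card V) * \<alpha>"
proof -
  let ?c = "\<lambda>v. (if v = x then 1 else if v \<in> S then \<beta> else \<alpha>)"
  have finS: "finite S" using assms finite_subset by blast
  have "(\<Sum>v\<in>V. ?c v) = (\<Sum>v\<in>S. ?c v) + (\<Sum>v\<in>V - S. ?c v)"
    using assms by (metis (no_types, lifting) add.commute sum.subset_diff)
  also have "(\<Sum>v\<in>V - S. ?c v) = (\<Sum>v\<in>V - S. \<alpha>)" using assms(1) by (intro sum.cong) auto
  also have "\<dots> = real (card (V - S)) * \<alpha>" by simp
  also have "(\<Sum>v\<in>S. ?c v) = ?c x + (\<Sum>v\<in>S - {x}. ?c v)" by (rule sum.remove[OF finS assms(1)])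
  also have "(\<Sum>v\<in>S - {x}. ?c v) = (\<Sum>v\<in>S - {x}. \<beta>)" by (intro sum.cong) auto
  also have "\<dots> = real (card (S - {x})) * \<beta>" by simp
  finally have eq: "(\<Sum>v\<in>V. ?c v) = 1 + real (card (S - {x})) * \<beta> + real (card (V - S)) * \<alpha>" by simp
  have "card (S - {x}) \<le> card S" "card (V - S) \<le> card V" using finS assms by (auto intro: card_mono)
  then have "real (card (S - {x})) * \<beta> \<le> real (card S) * \<beta>" "real (card (V - S)) * \<alpha> \<le> real (card V) * \<alpha>"
    using assms by (auto intro: mult_right_mono)
  then show ?thesis unfolding eq by linarith
qed

lemma badR_bound:
  assumes sn: "s \<le> n" and s16: "16 \<le> s"
  shows "real (card {G \<in> graphs n. \<not> rigidP n s G})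
     \<le> 2 ^ (n choose 2) * ((1 + real s * 2 powr (-(real s / 32)) + real n * 2 powr (-(3 * real s / 8 - 1/2))) ^ s - 1)"
proof -
  define V where "V = {..<n::nat}"
  define S where "S = {..<s::nat}"
  define E where "E = pairs V"
  define N where "N = n choose 2"
  define \<alpha> where "\<alpha> = (2::real) powr (-(3 * real s / 8 - 1/2))"
  define \<beta> where "\<beta> = (2::real) powr (-(real s / 32))"
  have ab0: "\<alpha> \<ge> 0" "\<beta> \<ge> 0" unfolding \<alpha>_def \<beta>_def by auto
  have finE: "finite E" unfolding E_def V_def by (intro finite_pairs) auto
  have cE: "card E = N" unfolding E_def V_def N_def by (simp add: card_pairs)
  have finS: "finite S" and cS: "card S = s" and SV: "S \<subseteq> V" and finV: "finite V" and cV: "card V = n"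
    unfolding S_def V_def using sn by auto
  define KP where "KP \<pi> Q \<longleftrightarrow> Q \<subseteq> pairs S \<and> (\<exists>\<mu>. \<forall>q\<in>Q. \<pi> ` q \<in> Q \<longrightarrow> \<mu> (\<pi> ` q) < (\<mu> q::nat))
     \<and> real (card Q) \<ge> (3 * real s / 8 - 1/2) * real (card {x\<in>S. \<pi> x \<notin> S})
          + real s / 32 * real (card {x\<in>S. \<pi> x \<noteq> x \<and> \<pi> x \<in> S})" for \<pi> :: "nat \<Rightarrow> nat" and Q
  define Qf where "Qf \<pi> = (SOME Q. KP \<pi> Q)" for \<pi>
  have KPQ: "KP \<pi> (Qf \<pi>)" if "inj_on \<pi> S" for \<pi>
  proof -
    have "\<exists>Q. KP \<pi> Q" using KL[OF finS that] s16 cS unfolding KP_def by auto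
    then show ?thesis unfolding Qf_def by (rule someI_ex)
  qed
  define P where "P = {\<pi> \<in> PiE S (\<lambda>_. V). inj_on \<pi> S \<and> \<pi> \<noteq> restrict id S}"
  define C where "C \<pi> = {G \<in> Pow E. \<forall>q\<in>Qf \<pi>. q \<in> G \<longleftrightarrow> \<pi> ` q \<in> G}" for \<pi>
  have finP: "finite P" unfolding P_def using finS finV by (auto intro: finite_subset[of _ "PiE S (\<lambda>_. V)"] finite_PiE)
  have sub: "{G \<in> graphs n. \<not> rigidP n s G} \<subseteq> (\<Union>\<pi>\<in>P. C \<pi>)"
  proof
    fix G assume G: "G \<in> {G \<in> graphs n. \<not> rigidP n s G}"
    then obtain \<pi>0 where p0: "inj_on \<pi>0 S" "\<pi>0 ` S \<subseteq> V" "\<forall>x\<in>S. \<forall>y\<in>S. {x,y} \<in> G \<longleftrightarrow> {\<pi>0 x, \<pi>0 y} \<in> G"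
      "\<exists>x\<in>S. \<pi>0 x \<noteq> x"
      unfolding rigidP_def S_def V_def by auto
    define \<pi> where "\<pi> = restrict \<pi>0 S"
    have injp: "inj_on \<pi> S" using p0(1) unfolding \<pi>_def inj_on_def by auto
    have "\<pi> \<in> P"
    proof -
      have "\<pi> \<in> PiE S (\<lambda>_. V)" using p0(2) unfolding \<pi>_def by auto
      moreover have "\<pi> \<noteq> restrict id S"
      proof
        assume "\<pi> = restrict id S"
        then have "\<forall>x\<in>S. \<pi>0 x = x" unfolding \<pi>_def by (metis id_apply restrict_apply')
        then show False using p0(4) by auto
      qed
      ultimately show ?thesis using injp unfolding P_def by auto
    qed
    moreover have "G \<in> C \<pi>"
    proof -
      have "G \<in> Pow E" using G unfolding E_def V_def graphs_pairs by auto
      moreover have "\<forall>q\<in>Qf \<pi>. q \<in> G \<longleftrightarrow> \<pi> ` q \<in> G"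
      proof
        fix q assume q: "q \<in> Qf \<pi>"
        then have "q \<in> pairs S" using KPQ[OF injp] unfolding KP_def by auto
        then obtain x y where xy: "q = {x,y}" "x \<in> S" "y \<in> S" unfolding pairs_def by (auto simp: card_2_iff)
        then have "\<pi> ` q = {\<pi>0 x, \<pi>0 y}" unfolding \<pi>_def by auto
        then show "q \<in> G \<longleftrightarrow> \<pi> ` q \<in> G" using p0(3) xy by auto
      qed
      ultimately show ?thesis unfolding C_def by simp
    qed
    ultimately show "G \<in> (\<Union>\<pi>\<in>P. C \<pi>)" by blast
  qed
  define c where "c x v = (if v = x then 1 else if v \<in> S then \<beta> else \<alpha>)" for x v :: nat
  have termb: "real (card (C \<pi>)) \<le> 2 ^ N * (\<Prod>x\<in>S. c x (\<pi> x))" if "\<pi> \<in> P" for \<pi>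
  proof -
    have injp: "inj_on \<pi> S" using that unfolding P_def by auto
    have K: "KP \<pi> (Qf \<pi>)" using KPQ[OF injp] .
    have QS: "Qf \<pi> \<subseteq> pairs S" using K unfolding KP_def by auto
    have QE: "Qf \<pi> \<subseteq> E" using QS SV unfolding E_def pairs_def by auto
    obtain \<mu> where mu: "\<forall>q\<in>Qf \<pi>. \<pi> ` q \<in> Qf \<pi> \<longrightarrow> \<mu> (\<pi> ` q) < (\<mu> q::nat)" using K unfolding KP_def by auto
    have "card (C \<pi>) \<le> 2 ^ (card E - card (Qf \<pi>))"
      unfolding C_def by (rule count_constr[OF finE QE, where \<mu> = \<mu>]) (use mu in auto)
    then have c0: "card (C \<pi>) \<le> 2 ^ (N - card (Qf \<pi>))" unfolding cE .
    have "real (card (C \<pi>)) \<le> real (2 ^ (N - card (Qf \<pi>)))" using c0 by (rule of_nat_mono)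
    then have c1: "real (card (C \<pi>)) \<le> (2::real) ^ (N - card (Qf \<pi>))" by simp
    have cQN: "card (Qf \<pi>) \<le> N" using QE finE cE card_mono by metis
    have "(2::real) ^ (N - card (Qf \<pi>)) = 2 ^ N / 2 ^ card (Qf \<pi>)" using cQN by (simp add: power_diff)
    moreover have "1 / (2::real) ^ card (Qf \<pi>) = 2 powr (- real (card (Qf \<pi>)))"
      by (simp add: powr_minus powr_realpow divide_inverse)
    ultimately have e1: "(2::real) ^ (N - card (Qf \<pi>)) = 2 ^ N * 2 powr (- real (card (Qf \<pi>)))"
      by (metis times_divide_eq_right mult.right_neutral)
    have "2 powr (- real (card (Qf \<pi>))) \<le> (2::real) powr (-((3 * real s / 8 - 1/2) * real (card {x\<in>S. \<pi> x \<notin> S})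
          + real s / 32 * real (card {x\<in>S. \<pi> x \<noteq> x \<and> \<pi> x \<in> S})))"
      using K unfolding KP_def by (intro powr_mono) auto
    also have "\<dots> = \<alpha> ^ card {x\<in>S. \<pi> x \<notin> S} * \<beta> ^ card {x\<in>S. \<pi> x \<noteq> x \<and> \<pi> x \<in> S}"
      unfolding \<alpha>_def \<beta>_def by (simp add: powr_realpow[symmetric] powr_powr powr_add[symmetric] algebra_simps)
    also have "\<dots> = (\<Prod>x\<in>S. c x (\<pi> x))" unfolding c_def using prod_cases3[OF finS, of \<pi> \<beta> \<alpha>] by simp
    finally have e2: "2 powr (- real (card (Qf \<pi>))) \<le> (\<Prod>x\<in>S. c x (\<pi> x))" .
    have X: "(2::real) ^ (N - card (Qf \<pi>)) \<le> 2 ^ N * (\<Prod>x\<in>S. c x (\<pi> x))"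
      unfolding e1 using e2 by (intro mult_left_mono) auto
    show ?thesis using c1 X by (rule order.trans)
  qed
  have "real (card {G \<in> graphs n. \<not> rigidP n s G}) \<le> real (card (\<Union>\<pi>\<in>P. C \<pi>))"
    using sub finP finE unfolding C_def by (intro of_nat_mono card_mono) (auto intro: finite_subset[of _ "Pow E"])
  also have "\<dots> \<le> real (\<Sum>\<pi>\<in>P. card (C \<pi>))" by (intro of_nat_mono card_UN_le[OF finP])
  also have "\<dots> = (\<Sum>\<pi>\<in>P. real (card (C \<pi>)))" by simp
  also have "\<dots> \<le> (\<Sum>\<pi>\<in>P. 2 ^ N * (\<Prod>x\<in>S. c x (\<pi> x)))" using termb by (intro sum_mono) auto
  also have "\<dots> = 2 ^ N * (\<Sum>\<pi>\<in>P. (\<Prod>x\<in>S. c x (\<pi> x)))" by (simp add: sum_distrib_left)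
  also have "(\<Sum>\<pi>\<in>P. (\<Prod>x\<in>S. c x (\<pi> x))) \<le> (\<Sum>\<pi>\<in>PiE S (\<lambda>_. V) - {restrict id S}. (\<Prod>x\<in>S. c x (\<pi> x)))"
    using finS finV ab0 unfolding P_def
    by (intro sum_mono2) (auto intro!: prod_nonneg simp: c_def finite_PiE)
  also have "\<dots> = (\<Sum>\<pi>\<in>PiE S (\<lambda>_. V). (\<Prod>x\<in>S. c x (\<pi> x))) - (\<Prod>x\<in>S. c x (restrict id S x))"
  proof -
    have "restrict id S \<in> PiE S (\<lambda>_. V)" using SV by auto
    then show ?thesis using finS finV by (subst sum_diff1) (auto simp: finite_PiE)
  qed
  also have "(\<Prod>x\<in>S. c x (restrict id S x)) = 1" unfolding c_def by (intro prod.neutral) auto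
  also have "(\<Sum>\<pi>\<in>PiE S (\<lambda>_. V). (\<Prod>x\<in>S. c x (\<pi> x))) = (\<Prod>x\<in>S. \<Sum>v\<in>V. c x v)"
    using finS finV by (rule prod_sum_PiE[symmetric]) 
  also have "(\<Prod>x\<in>S. \<Sum>v\<in>V. c x v) \<le> (\<Prod>x\<in>S. 1 + real s * \<beta> + real n * \<alpha>)"
  proof (intro prod_mono conjI)
    fix x assume x: "x \<in> S"
    show "0 \<le> (\<Sum>v\<in>V. c x v)" using ab0 unfolding c_def by (intro sum_nonneg) auto
    show "(\<Sum>v\<in>V. c x v) \<le> 1 + real s * \<beta> + real n * \<alpha>"
      using sum_c_bound[OF x SV finV ab0] cS cV unfolding c_def by simp
  qed
  also have "\<dots> = (1 + real s * \<beta> + real n * \<alpha>) ^ s" using cS by simp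
  finally show ?thesis unfolding \<alpha>_def \<beta>_def N_def by (simp add: mult_left_mono)
qed

lemma good_of_props:
  assumes m: "m = s + 2" "m \<le> n" and G1: "G1 \<in> graphs n" "rigidP n s G1" "distP n s G1"
    and G2: "G2 \<in> graphs n"
    and cnt: "\<forall>F\<in>graphs m. ind_count {..<n} G1 m F = ind_count {..<n} G2 m F"
  shows "graph_iso {..<n} G1 {..<n} G2"
proof -
  have G1p: "G1 \<subseteq> pairs {..<n}" and G2p: "G2 \<subseteq> pairs {..<n}" using G1 G2 by (auto simp: graphs_pairs)
  obtain \<beta> where \<beta>: "bij_betw \<beta> {T. T\<subseteq>{..<n} \<and> card T = m} {T. T\<subseteq>{..<n} \<and> card T = m}"
     "\<forall>T. T \<subseteq> {..<n} \<and> card T = m \<longrightarrow> graph_iso T G1 (\<beta> T) G2"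
    using exists_beta[of "{..<n}" G1 G2 m] G1p G2p cnt by (auto simp: graphs_pairs)
  define \<Gamma> where "\<Gamma> T = (SOME f. isoF f T G1 (\<beta> T) G2)" for T
  have "recon {..<n} {..<s} G1 G2 \<beta> \<Gamma>"
  proof (unfold_locales)
    show "finite {..<n}" by simp
    show "{..<s} \<subseteq> {..<n}" using m by auto
    show "card {..<s} + 2 \<le> card {..<n}" using m by simp
    show "G1 \<subseteq> pairs {..<n}" "G2 \<subseteq> pairs {..<n}" using G1p G2p .
    show "\<forall>x\<in>{..<s}. \<pi> x = x" if "inj_on \<pi> {..<s}" "\<pi> ` {..<s} \<subseteq> {..<n}"
      "\<forall>x\<in>{..<s}. \<forall>y\<in>{..<s}. ({x, y} \<in> G1) = ({\<pi> x, \<pi> y} \<in> G1)" for \<pi>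
      using G1(2) that unfolding rigidP_def by blast
    show "\<exists>x\<in>{..<s}. ({x, u} \<in> G1) \<noteq> ({x, v} \<in> G1)"
      if "u \<in> {..<n} - {..<s}" "v \<in> {..<n} - {..<s}" "u \<noteq> v" for u v
      using G1(3) that unfolding distP_def by blast
    show "bij_betw \<beta> {T. T \<subseteq> {..<n} \<and> card T = card {..<s} + 2} {T. T \<subseteq> {..<n} \<and> card T = card {..<s} + 2}"
      using \<beta>(1) m by simp
    show "isoF (\<Gamma> T) T G1 (\<beta> T) G2" if "T \<subseteq> {..<n}" "card T = card {..<s} + 2" for T
    proof -
      have "graph_iso T G1 (\<beta> T) G2" using \<beta>(2) that m by simp
      then have "\<exists>f. isoF f T G1 (\<beta> T) G2" by (simp add: graph_iso_isoF)
      then show ?thesis unfolding \<Gamma>_def by (rule someI_ex)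
    qed
  qed
  then show ?thesis by (rule recon.main)
qed

lemma card_graphs: "card (graphs n) = 2 ^ (n choose 2)"
  by (simp add: graphs_pairs card_Pow card_pairs finite_pairs)

definition Good :: "nat \<Rightarrow> nat set set set" where
  "Good n = {G1 \<in> graphs n. \<forall>G2 \<in> graphs n.
              (\<forall>F \<in> graphs (sub_size n).
                 ind_count {..<n} G1 (sub_size n) F = ind_count {..<n} G2 (sub_size n) F)
              \<longrightarrow> graph_iso {..<n} G1 {..<n} G2}"

lemma ratio_bound:
  assumes big: "18 \<le> sub_size n" "sub_size n \<le> n"
  defines "s \<equiv> sub_size n - 2"
  shows "1 - (((1 + real s * 2 powr (-(real s / 32)) + real n * 2 powr (-(3 * real s / 8 - 1/2))) ^ s - 1)
            + real n * real n / 2 ^ s) \<le> real (card (Good n)) / real (card (graphs n))"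
proof -
  define N where "N = n choose 2"
  define A where "A = (1 + real s * 2 powr (-(real s / 32)) + real n * 2 powr (-(3 * real s / 8 - 1/2))) ^ s - 1"
  have sn: "s \<le> n" "16 \<le> s" "sub_size n = s + 2" using big unfolding s_def by auto
  have finG: "finite (graphs n)" by (simp add: graphs_pairs finite_pairs)
  have sub1: "{G \<in> graphs n. rigidP n s G \<and> distP n s G} \<subseteq> Good n"
    unfolding Good_def using good_of_props[OF sn(3) big(2)] by blast
  have GoodG: "Good n \<subseteq> graphs n" unfolding Good_def by auto
  have "graphs n - Good n \<subseteq> {G \<in> graphs n. \<not> rigidP n s G} \<union> {G \<in> graphs n. \<not> distP n s G}"
    using sub1 by blast
  then have "card (graphs n - Good n) \<le> card ({G \<in> graphs n. \<not> rigidP n s G} \<union> {G \<in> graphs n. \<not> distP n s G})"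
    using finG by (intro card_mono) auto
  also have "\<dots> \<le> card {G \<in> graphs n. \<not> rigidP n s G} + card {G \<in> graphs n. \<not> distP n s G}"
    by (rule card_Un_le)
  finally have c1: "card (graphs n) - card (Good n) \<le> card {G \<in> graphs n. \<not> rigidP n s G} + card {G \<in> graphs n. \<not> distP n s G}"
    using card_Diff_subset[OF finite_subset[OF GoodG finG] GoodG] by simp
  have cGle: "card (Good n) \<le> card (graphs n)" using finG GoodG by (intro card_mono)
  have tot: "real (card (graphs n)) = 2 ^ N" unfolding card_graphs N_def by simp
  have R: "real (card {G \<in> graphs n. \<not> rigidP n s G}) \<le> 2 ^ N * A"
    using badR_bound[OF sn(1,2)] unfolding A_def N_def .
  have D: "real (card {G \<in> graphs n. \<not> distP n s G}) \<le> 2 ^ N * (real n * real n / 2 ^ s)"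
  proof -
    have "real (card {G \<in> graphs n. \<not> distP n s G}) \<le> real (n * n * 2 ^ (N - s))"
      using badD_bound[OF sn(1)] unfolding N_def by (rule of_nat_mono)
    also have "\<dots> = real n * real n * 2 ^ (N - s)" by simp
    also have "(2::real) ^ (N - s) = 2 ^ N / 2 ^ s"
    proof -
      have "s \<le> N"
      proof -
        have e: "2 * N = n * (n - 1)" by (simp add: N_def choose2_nat)
        have "n * 2 \<le> n * (n - 1)" using sn by (intro mult_le_mono2) linarith
        then have "n \<le> N" using e by linarith
        then show ?thesis using sn by simp
      qed
      then show ?thesis by (simp add: power_diff)
    qed
    finally show ?thesis by (simp add: field_simps)
  qed
  have "real (card (graphs n) - card (Good n)) \<le> real (card {G \<in> graphs n. \<not> rigidP n s G} + card {G \<in> graphs n. \<not> distP n s G})"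
    using c1 by (rule of_nat_mono)
  then have "real (card (graphs n)) - real (card (Good n)) \<le> real (card {G \<in> graphs n. \<not> rigidP n s G}) + real (card {G \<in> graphs n. \<not> distP n s G})"
    using of_nat_diff[OF cGle] by simp
  then have h0: "2 ^ N - real (card (Good n)) \<le> 2 ^ N * A + 2 ^ N * (real n * real n / 2 ^ s)"
    using R D tot by linarith
  have e: "(1 - (A + real n * real n / 2 ^ s)) * 2 ^ N = 2 ^ N - 2 ^ N * A - 2 ^ N * (real n * real n / 2 ^ s)"
    by (simp only: ring_distribs mult_1 mult.commute)
  have "(1 - (A + real n * real n / 2 ^ s)) * 2 ^ N \<le> real (card (Good n))" using h0 e by linarith
  then have "1 - (A + real n * real n / 2 ^ s) \<le> real (card (Good n)) / 2 ^ N"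
    by (subst pos_le_divide_eq) auto
  then show ?thesis unfolding A_def tot .
qed


lemma sub_size_bounds:
  assumes "1 \<le> n"
  shows "3 * log 2 (real n) \<le> real (sub_size n) \<and> real (sub_size n) \<le> 3 * log 2 (real n) + 1"
proof -
  have l0: "0 \<le> 3 * log 2 (real n)" using assms by simp
  then have c0: "0 \<le> \<lceil>3 * log 2 (real n)\<rceil>" by linarith
  have "real (sub_size n) = real_of_int \<lceil>3 * log 2 (real n)\<rceil>"
    unfolding sub_size_def using c0 by simp
  moreover have "3 * log 2 (real n) \<le> real_of_int \<lceil>3 * log 2 (real n)\<rceil>" by (rule le_of_int_ceiling)
  moreover have "real_of_int \<lceil>3 * log 2 (real n)\<rceil> \<le> 3 * log 2 (real n) + 1" by (rule of_int_ceiling_le_add_one)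
  ultimately show ?thesis by simp
qed

definition gfun :: "real \<Rightarrow> real" where
  "gfun x = (3 * (ln x / ln 2))^2 * (2 powr (1/16) * x powr (-3/32))
          + 3 * (ln x / ln 2) * x * (2 powr (5/4) * x powr (-9/8))"

definition hfun :: "real \<Rightarrow> real" where
  "hfun x = x * x * (4 * x powr (-3))"

lemma gfun_lim: "(gfun \<longlongrightarrow> 0) at_top"
  unfolding gfun_def by real_asymp

lemma hfun_lim: "(hfun \<longlongrightarrow> 0) at_top"
  unfolding hfun_def by real_asymp

lemma ev_real1: "eventually (\<lambda>x::real. 18 \<le> 3 * (ln x / ln 2)) at_top"
  by real_asymp

lemma ev_real2: "eventually (\<lambda>x::real. 3 * (ln x / ln 2) + 1 \<le> x) at_top"
  by real_asymp

lemma ev_real: "eventually (\<lambda>x. 18 \<le> 3 * log 2 x \<and> 3 * log 2 x + 1 \<le> x) at_top"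
  using eventually_conj[OF ev_real1 ev_real2] by (simp add: log_def)

lemma powr_log_shift:
  assumes "(x::real) > 0" shows "2 powr (c * log 2 x + d) = 2 powr d * x powr c"
proof -
  have "2 powr (c * log 2 x) = (2 powr log 2 x) powr c" by (simp add: powr_powr mult.commute)
  also have "\<dots> = x powr c" using assms by simp
  finally show ?thesis by (simp add: powr_add mult.commute)
qed

lemma seq_of_real:
  assumes "(f \<longlongrightarrow> l) at_top" shows "(\<lambda>n. f (real n)) \<longlonglongrightarrow> l"
  using filterlim_compose[OF assms filterlim_real_sequentially] by (simp add: o_def)

lemma ev_big: "eventually (\<lambda>n. 1 \<le> n \<and> 18 \<le> sub_size n \<and> sub_size n \<le> n) sequentially"
proof -
  have "eventually (\<lambda>n. 18 \<le> 3 * log 2 (real n) \<and> 3 * log 2 (real n) + 1 \<le> real n) sequentially"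
    using filterlim_iff[THEN iffD1, OF filterlim_real_sequentially, rule_format, OF ev_real] .
  moreover have "eventually (\<lambda>n. 1 \<le> n) sequentially" by (rule eventually_ge_at_top)
  ultimately show ?thesis
  proof eventually_elim
    case (elim n)
    then show ?case using sub_size_bounds[of n] by auto
  qed
qed

lemma per_n_bounds:
  assumes n: "1 \<le> n" "18 \<le> sub_size n" "sub_size n \<le> n"
  defines "s \<equiv> sub_size n - 2"
  shows "0 \<le> (1 + real s * 2 powr (-(real s / 32)) + real n * 2 powr (-(3 * real s / 8 - 1/2))) ^ s - 1
     \<and> (1 + real s * 2 powr (-(real s / 32)) + real n * 2 powr (-(3 * real s / 8 - 1/2))) ^ s - 1 \<le> exp (gfun (real n)) - 1
     \<and> 0 \<le> real n * real n / 2 ^ s \<and> real n * real n / 2 ^ s \<le> hfun (real n)"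
proof -
  define l where "l = 3 * log 2 (real n)"
  define \<alpha> where "\<alpha> = (2::real) powr (-(3 * real s / 8 - 1/2))"
  define \<beta> where "\<beta> = (2::real) powr (-(real s / 32))"
  have sb: "l \<le> real (sub_size n)" "real (sub_size n) \<le> l + 1" using sub_size_bounds[OF n(1)] unfolding l_def by auto
  have rs: "real s = real (sub_size n) - 2" unfolding s_def using n by simp
  have s1: "l - 2 \<le> real s" "real s \<le> l" using sb rs by auto
  have s0: "0 \<le> real s" by simp
  define y where "y = real s * \<beta> + real n * \<alpha>"
  have y0: "0 \<le> y" unfolding y_def \<alpha>_def \<beta>_def by simp
  have A0: "0 \<le> (1 + y) ^ s - 1" using y0 by (simp add: one_le_power)
  have "(1 + y) ^ s \<le> exp y ^ s" using y0 by (intro power_mono) (auto simp: exp_ge_add_one_self add.commute)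
  also have "\<dots> = exp (real s * y)" by (simp add: exp_of_nat_mult)
  finally have A1: "(1 + y) ^ s \<le> exp (real s * y)" .
  have b1: "\<beta> \<le> 2 powr (-(l - 2)/32)" unfolding \<beta>_def using s1 by (intro powr_mono) auto
  have a1: "\<alpha> \<le> 2 powr (-(3*(l - 2)/8 - 1/2))" unfolding \<alpha>_def using s1 by (intro powr_mono) auto
  have ss: "real s * real s \<le> l^2" using s1 s0 by (simp add: power2_eq_square mult_mono)
  have t1: "real s * real s * \<beta> \<le> l^2 * 2 powr (-(l - 2)/32)"
    using ss b1 by (intro mult_mono) (auto simp: \<beta>_def)
  have sn': "real s * real n \<le> l * real n" using s1 by (intro mult_right_mono) auto
  have t2: "real s * real n * \<alpha> \<le> l * real n * 2 powr (-(3*(l - 2)/8 - 1/2))"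
    using sn' a1 s1 s0 by (intro mult_mono) (auto simp: \<alpha>_def)
  have "real s * y = real s * real s * \<beta> + real s * real n * \<alpha>" unfolding y_def by (simp add: algebra_simps)
  also have "\<dots> \<le> gfun (real n)"
  proof -
    have np: "real n > 0" using n by simp
    have x1: "-(l - 2)/32 = -3/32 * log 2 (real n) + 1/16" unfolding l_def by (simp add: field_simps)
    have e1: "(2::real) powr (-(l - 2)/32) = 2 powr (1/16) * real n powr (-3/32)"
      unfolding x1 by (rule powr_log_shift[OF np])
    have x2: "-(3*(l - 2)/8 - 1/2) = -9/8 * log 2 (real n) + 5/4" unfolding l_def by (simp add: field_simps)
    have e2: "(2::real) powr (-(3*(l - 2)/8 - 1/2)) = 2 powr (5/4) * real n powr (-9/8)"
      unfolding x2 by (rule powr_log_shift[OF np])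
    have e3: "l = 3 * (ln (real n) / ln 2)" unfolding l_def by (simp add: log_def)
    show ?thesis using t1[unfolded e1, unfolded e3] t2[unfolded e2, unfolded e3] unfolding gfun_def by linarith
  qed
  finally have "exp (real s * y) \<le> exp (gfun (real n))" by simp
  then have A2: "(1 + y) ^ s - 1 \<le> exp (gfun (real n)) - 1" using A1 by linarith
  have "real n * real n / 2 ^ s = real n * real n * 2 powr (- real s)"
    by (simp add: powr_minus powr_realpow divide_inverse)
  also have "\<dots> \<le> real n * real n * 2 powr (-(l - 2))" using s1 by (intro mult_left_mono powr_mono) auto
  also have "(2::real) powr (-(l - 2)) = 4 * real n powr (-3)"
  proof -
    have x3: "-(l - 2) = -3 * log 2 (real n) + 2" unfolding l_def by (simp add: field_simps)
    have "(2::real) powr (-(l - 2)) = 2 powr 2 * real n powr (-3)"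
      unfolding x3 using n by (intro powr_log_shift) auto
    then show ?thesis by simp
  qed
  finally have B1: "real n * real n / 2 ^ s \<le> hfun (real n)" unfolding hfun_def .
  have B0: "0 \<le> real n * real n / 2 ^ s" by simp
  show ?thesis using A0 A2 B0 B1 unfolding y_def \<alpha>_def \<beta>_def by (simp only: add.assoc)
qed

lemma main_lim: "(\<lambda>n. real (card (Good n)) / real (card (graphs n))) \<longlonglongrightarrow> 1"
proof -
  define A where "A n = (1 + real (sub_size n - 2) * 2 powr (-(real (sub_size n - 2) / 32))
      + real n * 2 powr (-(3 * real (sub_size n - 2) / 8 - 1/2))) ^ (sub_size n - 2) - 1" for n
  define B where "B n = real n * real n / 2 ^ (sub_size n - 2)" for n
  have gl: "(\<lambda>n. exp (gfun (real n)) - 1) \<longlonglongrightarrow> 0"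
  proof -
    have "(\<lambda>n. gfun (real n)) \<longlonglongrightarrow> 0" by (rule seq_of_real[OF gfun_lim])
    then have "(\<lambda>n. exp (gfun (real n))) \<longlonglongrightarrow> exp 0" by (rule tendsto_exp)
    then have "(\<lambda>n. exp (gfun (real n)) - 1) \<longlonglongrightarrow> exp 0 - 1" by (intro tendsto_diff tendsto_const)
    then show ?thesis by simp
  qed
  have hl: "(\<lambda>n. hfun (real n)) \<longlonglongrightarrow> 0" by (rule seq_of_real[OF hfun_lim])
  have evb: "eventually (\<lambda>n. 0 \<le> A n \<and> A n \<le> exp (gfun (real n)) - 1 \<and> 0 \<le> B n \<and> B n \<le> hfun (real n)) sequentially"
    using ev_big by eventually_elim (use per_n_bounds in \<open>auto simp: A_def B_def\<close>)
  have Al: "A \<longlonglongrightarrow> 0"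
    by (rule tendsto_sandwich[OF _ _ tendsto_const gl]) (use evb in \<open>auto elim: eventually_mono\<close>)
  have Bl: "B \<longlonglongrightarrow> 0"
    by (rule tendsto_sandwich[OF _ _ tendsto_const hl]) (use evb in \<open>auto elim: eventually_mono\<close>)
  have low: "(\<lambda>n. 1 - (A n + B n)) \<longlonglongrightarrow> 1"
    using tendsto_diff[OF tendsto_const tendsto_add[OF Al Bl], of 1] by simp
  have ev2: "eventually (\<lambda>n. 1 - (A n + B n) \<le> real (card (Good n)) / real (card (graphs n))) sequentially"
    using ev_big by eventually_elim (use ratio_bound in \<open>auto simp: A_def B_def\<close>)
  have ev3: "eventually (\<lambda>n. real (card (Good n)) / real (card (graphs n)) \<le> 1) sequentially"
  proof (rule always_eventually, rule allI)
    fix n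
    have "card (Good n) \<le> card (graphs n)" unfolding Good_def
      by (intro card_mono) (auto simp: graphs_pairs finite_pairs)
    moreover have "0 < card (graphs n)" by (simp add: card_graphs)
    ultimately show "real (card (Good n)) / real (card (graphs n)) \<le> 1" by simp
  qed
  show ?thesis by (rule tendsto_sandwich[OF ev2 ev3 low tendsto_const])
qed

theorem corollary1:
  shows "(\<lambda>n. real (card {G1 \<in> graphs n. \<forall>G2 \<in> graphs n.
              (\<forall>F \<in> graphs (sub_size n).
                 ind_count {..<n} G1 (sub_size n) F = ind_count {..<n} G2 (sub_size n) F)
              \<longrightarrow> graph_iso {..<n} G1 {..<n} G2})
            / real (card (graphs n)))
         \<longlonglongrightarrow> 1"
  using main_lim unfolding Good_def .

end
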